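(* Assume the penalty is $D(\hat\mu,P_{s,a})=\sup_{V\in\mathbb R^{\mathcal S}}\big(-\sigma(P_{s,a},V)-\mathbb E_{s'\sim\hat\mu}V(s')\big)$ for all $s,a$ and $\hat\mu\in\Delta(\mathcal S)$. Then for every stationary policy $\pi$, $$\overline V^\star=\widetilde V^\star,\quad \overline V^\pi=\widetilde V^\pi,\quad \overline Q^\star=\widetilde Q^\star,\quad \overline Q^\pi=\widetilde Q^\pi.$$ Writing $V^\star,V^\pi$ for these common values, for every initial state the supremum–infimum defining $\overline V^\star$ is attained by choosing actions via the deterministic stationary policy $\pi^\star(s)\in\arg\max_a\big(r(s,a)-\gamma\sigma(P_{s,a},V^\star)\big)$ and the stationary transition kernel (the same at every time $t$) $\hat P^\star_{s,a}\in\arg\min_{\hat\mu\in\Delta(\mathcal S)}\big(D(\hat\mu,P_{s,a})+\mathbb E_{s'\sim\hat\mu}V^\star(s')\big)$; and the infimum defining $\overline V^\pi$ is attained by the stationary kernel $\hat P^\pi_{s,a}\in\arg\min_{\hat\mu\in\Delta(\mathcal S)}\big(D(\hat\mu,P_{s,a})+\mathbb E_{s'\sim\hat\mu}V^\pi(s')\big)$ used at every time $t$.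
   Context: $\mathcal S$ and $\mathcal A$ are finite sets; $\Delta(\mathcal X)$ denotes the probability simplex over a finite set $\mathcal X$. $P=\{P_{s,a}\}$ with $P_{s,a}\in\Delta(\mathcal S)$ is the nominal transition kernel, $r:\mathcal S\times\mathcal A\to[0,1]$, $\gamma\in[0,1)$. A stationary policy is a map $\pi:\mathcal S\to\Delta(\mathcal A)$. A function $\sigma:\mathbb R^{\mathcal S}\to\mathbb R$ is a convex risk measure if (i) $V'\le V$ pointwise implies $\sigma(V)\le\sigma(V')$; (ii) $\sigma(V+m)=\sigma(V)-m$ for every constant $m$; (iii) $\sigma$ is convex. For each $(s,a)$ a convex risk measure $\sigma(P_{s,a},\cdot)$ is given. It is known (dual representation) that with $D$ as in the claim, $\sigma(P_{s,a},V)=\sup_{\hat\mu\in\Delta(\mathcal S)}(-\mathbb E_{\hat\mu}V-D(\hat\mu,P_{s,a}))$, and $D(\cdot,P_{s,a})$ is convex and lower semicontinuous. Risk-sensitive values: $\widetilde V^\pi$ is the unique solution of $\widetilde V^\pi(s)=\sum_a\pi(a|s)(r(s,a)-\gamma\sigma(P_{s,a},\widetilde V^\pi))$, $\widetilde V^\star$ the unique solution of $\widetilde V^\star(s)=\max_a(r(s,a)-\gamma\sigma(P_{s,a},\widetilde V^\star))$, $\widetilde Q^\pi(s,a)=r(s,a)-\gamma\sigma(P_{s,a},\widetilde V^\pi)$, $\widetilde Q^\star(s,a)=r(s,a)-\gamma\sigma(P_{s,a},\widetilde V^\star)$. Regularized robust values: an adversary picks a sequence $\{\hat P_t\}_{t\ge0}$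 of (time-dependent) transition kernels $\hat P_{t;s,a}\in\Delta(\mathcal S)$; trajectories evolve by $s_{t+1}\sim\hat P_{t;s_t,a_t}$. Then $\overline V^\pi(s)=\inf_{\{\hat P_t\}}\mathbb E\big[\sum_{t\ge0}\gamma^t\big(r(s_t,a_t)+\gamma D(\hat P_{t;s_t,a_t},P_{s_t,a_t})\big)\mid s_0=s\big]$ with $a_t\sim\pi(\cdot|s_t)$; $\overline V^\star(s)$ is the same expression with $\sup$ over all (possibly history-dependent) action choices $\{a_t\}_{t\ge0}$ placed before the $\inf$; $\overline Q^\pi(s,a)$ and $\overline Q^\star(s,a)$ are defined identically but with $a_0=a$ fixed (and actions $a_t$, $t\ge1$, drawn from $\pi$, resp. supremized). *)

theory Defs
  imports "HOL-Probability.Probability"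
begin

definition pexp :: "'s::finite pmf \<Rightarrow> ('s \<Rightarrow> real) \<Rightarrow> real" where
  "pexp \<mu> V = (\<Sum>x\<in>UNIV. pmf \<mu> x * V x)"

definition convex_risk_measure :: "(('s \<Rightarrow> real) \<Rightarrow> real) \<Rightarrow> bool" where
  "convex_risk_measure \<rho> \<longleftrightarrow>
     (\<forall>V V'. (\<forall>x. V' x \<le> V x) \<longrightarrow> \<rho> V \<le> \<rho> V') \<and>
     (\<forall>V m. \<rho> (\<lambda>x. V x + m) = \<rho> V - m) \<and>
     (\<forall>V W t. 0 \<le> t \<and> t \<le> 1 \<longrightarrow>
        \<rho> (\<lambda>x. t * V x + (1 - t) * W x) \<le> t * \<rho> V + (1 - t) * \<rho> W)"

definition penalty :: "('s::finite pmf \<Rightarrow> ('s \<Rightarrow> real) \<Rightarrow> real) \<Rightarrow> 's pmf \<Rightarrow> 's pmf \<Rightarrow> ereal" where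
  "penalty sig \<mu> \<nu> = (SUP V. ereal (- sig \<nu> V - pexp \<mu> V))"

definition rs_V_pol ::
  "('s::finite pmf \<Rightarrow> ('s \<Rightarrow> real) \<Rightarrow> real) \<Rightarrow> ('s \<Rightarrow> 'a::finite \<Rightarrow> 's pmf) \<Rightarrow> ('s \<Rightarrow> 'a \<Rightarrow> real)
    \<Rightarrow> real \<Rightarrow> ('s \<Rightarrow> 'a pmf) \<Rightarrow> 's \<Rightarrow> real" where
  "rs_V_pol sig P r \<gamma> \<pi> = (THE V. \<forall>s. V s = (\<Sum>a\<in>UNIV. pmf (\<pi> s) a * (r s a - \<gamma> * sig (P s a) V)))"

definition rs_V_opt ::
  "('s::finite pmf \<Rightarrow> ('s \<Rightarrow> real) \<Rightarrow> real) \<Rightarrow> ('s \<Rightarrow> 'a::finite \<Rightarrow> 's pmf) \<Rightarrow> ('s \<Rightarrow> 'a \<Rightarrow> real)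
    \<Rightarrow> real \<Rightarrow> 's \<Rightarrow> real" where
  "rs_V_opt sig P r \<gamma> = (THE V. \<forall>s. V s = (MAX a. r s a - \<gamma> * sig (P s a) V))"

definition rs_Q_pol ::
  "('s::finite pmf \<Rightarrow> ('s \<Rightarrow> real) \<Rightarrow> real) \<Rightarrow> ('s \<Rightarrow> 'a::finite \<Rightarrow> 's pmf) \<Rightarrow> ('s \<Rightarrow> 'a \<Rightarrow> real)
    \<Rightarrow> real \<Rightarrow> ('s \<Rightarrow> 'a pmf) \<Rightarrow> 's \<Rightarrow> 'a \<Rightarrow> real" where
  "rs_Q_pol sig P r \<gamma> \<pi> s a = r s a - \<gamma> * sig (P s a) (rs_V_pol sig P r \<gamma> \<pi>)"

definition rs_Q_opt ::
  "('s::finite pmf \<Rightarrow> ('s \<Rightarrow> real) \<Rightarrow> real) \<Rightarrow> ('s \<Rightarrow> 'a::finite \<Rightarrow> 's pmf) \<Rightarrow> ('s \<Rightarrow> 'a \<Rightarrow> real)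
    \<Rightarrow> real \<Rightarrow> 's \<Rightarrow> 'a \<Rightarrow> real" where
  "rs_Q_opt sig P r \<gamma> s a = r s a - \<gamma> * sig (P s a) (rs_V_opt sig P r \<gamma>)"

text \<open>History-dependent randomized action choice: given the past history
  (list of (state, action) pairs, its length is the current time) and the current state,
  a distribution over actions.\<close>
type_synonym ('s, 'a) hpolicy = "('s \<times> 'a) list \<Rightarrow> 's \<Rightarrow> 'a pmf"
type_synonym ('s, 'a) kseq = "nat \<Rightarrow> 's \<Rightarrow> 'a \<Rightarrow> 's pmf"

text \<open>Distribution of the history (s_0,a_0),...,(s_n,a_n).\<close>
fun traj :: "('s, 'a) hpolicy \<Rightarrow> ('s, 'a) kseq \<Rightarrow> 's \<Rightarrow> nat \<Rightarrow> ('s \<times> 'a) list pmf" where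
  "traj \<mu> Q s 0 = map_pmf (\<lambda>a. [(s, a)]) (\<mu> [] s)"
| "traj \<mu> Q s (Suc n) =
     bind_pmf (traj \<mu> Q s n) (\<lambda>h.
       bind_pmf (Q n (fst (last h)) (snd (last h))) (\<lambda>s'.
         map_pmf (\<lambda>a'. h @ [(s', a')]) (\<mu> h s')))"

definition stage ::
  "('s::finite pmf \<Rightarrow> ('s \<Rightarrow> real) \<Rightarrow> real) \<Rightarrow> ('s \<Rightarrow> 'a \<Rightarrow> 's pmf) \<Rightarrow> ('s \<Rightarrow> 'a \<Rightarrow> real)
    \<Rightarrow> real \<Rightarrow> ('s, 'a) kseq \<Rightarrow> nat \<Rightarrow> 's \<times> 'a \<Rightarrow> ereal" where
  "stage sig P r \<gamma> Q t xa =
     ereal (r (fst xa) (snd xa)) + ereal \<gamma> * penalty sig (Q t (fst xa) (snd xa)) (P (fst xa) (snd xa))"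

definition ret ::
  "('s::finite pmf \<Rightarrow> ('s \<Rightarrow> real) \<Rightarrow> real) \<Rightarrow> ('s \<Rightarrow> 'a \<Rightarrow> 's pmf) \<Rightarrow> ('s \<Rightarrow> 'a \<Rightarrow> real)
    \<Rightarrow> real \<Rightarrow> ('s, 'a) hpolicy \<Rightarrow> ('s, 'a) kseq \<Rightarrow> 's \<Rightarrow> ereal" where
  "ret sig P r \<gamma> \<mu> Q s =
     (\<Sum>t. ereal (\<gamma> ^ t) *
        (\<Sum>h\<in>set_pmf (traj \<mu> Q s t). ereal (pmf (traj \<mu> Q s t) h) * stage sig P r \<gamma> Q t (last h)))"

definition stat_pol :: "('s \<Rightarrow> 'a pmf) \<Rightarrow> ('s, 'a) hpolicy" where
  "stat_pol \<pi> = (\<lambda>h x. \<pi> x)"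

definition det_pol :: "('s \<Rightarrow> 'a) \<Rightarrow> ('s, 'a) hpolicy" where
  "det_pol f = (\<lambda>h x. return_pmf (f x))"

definition force_first :: "'a \<Rightarrow> ('s, 'a) hpolicy \<Rightarrow> ('s, 'a) hpolicy" where
  "force_first a \<mu> = (\<lambda>h x. if h = [] then return_pmf a else \<mu> h x)"

definition rb_V_pol where
  "rb_V_pol sig P r \<gamma> \<pi> s = (INF Q. ret sig P r \<gamma> (stat_pol \<pi>) Q s)"

definition rb_V_opt where
  "rb_V_opt sig P r \<gamma> s = (SUP \<mu>. INF Q. ret sig P r \<gamma> \<mu> Q s)"

definition rb_Q_pol where
  "rb_Q_pol sig P r \<gamma> \<pi> s a = (INF Q. ret sig P r \<gamma> (force_first a (stat_pol \<pi>)) Q s)"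

definition rb_Q_opt where
  "rb_Q_opt sig P r \<gamma> s a = (SUP \<mu>. INF Q. ret sig P r \<gamma> (force_first a \<mu>) Q s)"

end

theory Submission
  imports Defs
begin


definition dmax :: "('s::finite \<Rightarrow> real) \<Rightarrow> ('s \<Rightarrow> real) \<Rightarrow> real" where
  "dmax V W = Max (range (\<lambda>x. \<bar>V x - W x\<bar>))"

lemma dmax_ge: "\<bar>V x - W x\<bar> \<le> dmax V W"
  unfolding dmax_def by (rule Max_ge) auto

lemma dmax_le: "(\<And>x. \<bar>V x - W x\<bar> \<le> c) \<Longrightarrow> dmax V W \<le> c"
  unfolding dmax_def by (subst Max_le_iff) auto

lemma dmax_nonneg: "0 \<le> dmax V W"
  using dmax_ge[of V _ W] abs_ge_zero order_trans by blast

lemma crm_mono: "convex_risk_measure \<rho> \<Longrightarrow> (\<And>x. V' x \<le> V x) \<Longrightarrow> \<rho> V \<le> \<rho> V'"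
  unfolding convex_risk_measure_def by blast

lemma crm_trans: "convex_risk_measure \<rho> \<Longrightarrow> \<rho> (\<lambda>x. V x + m) = \<rho> V - m"
  unfolding convex_risk_measure_def by blast

lemma crm_lip1:
  assumes "convex_risk_measure \<rho>" "\<And>x. \<bar>V x - W x\<bar> \<le> m"
  shows "\<rho> W - m \<le> \<rho> V"
proof -
  have "\<rho> V \<ge> \<rho> (\<lambda>x. W x + m)"
  proof (rule crm_mono[OF assms(1)])
    fix x show "V x \<le> W x + m" using assms(2)[of x] by (simp add: abs_le_iff)
  qed
  thus ?thesis using crm_trans[OF assms(1)] by simp
qed

lemma crm_lip:
  assumes "convex_risk_measure \<rho>" "\<And>x. \<bar>V x - W x\<bar> \<le> m"
  shows "\<bar>\<rho> V - \<rho> W\<bar> \<le> m"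
proof -
  have "\<rho> W - m \<le> \<rho> V" by (rule crm_lip1[OF assms])
  moreover have "\<rho> V - m \<le> \<rho> W"
    by (rule crm_lip1[OF assms(1), of W V m]) (use assms(2) in \<open>simp add: abs_minus_commute\<close>)
  ultimately show ?thesis by linarith
qed

lemma crm_lip_dmax:
  assumes "convex_risk_measure \<rho>"
  shows "\<bar>\<rho> V - \<rho> W\<bar> \<le> dmax V W"
  using crm_lip[OF assms dmax_ge] .

lemma max_lip:
  fixes f g :: "'a::finite \<Rightarrow> real"
  assumes "\<And>a. \<bar>f a - g a\<bar> \<le> c"
  shows "\<bar>(MAX a. f a) - (MAX a. g a)\<bar> \<le> c"
proof -
  have 1: "(MAX a. f a) \<le> (MAX a. g a) + c" if "\<And>a. \<bar>f a - g a\<bar> \<le> c" for f g :: "'a \<Rightarrow> real"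
  proof -
    have "f a \<le> (MAX a. g a) + c" for a
    proof -
      have "g a \<le> (MAX a. g a)" by (rule Max_ge) auto
      thus ?thesis using that[of a] by linarith
    qed
    thus ?thesis by (subst Max_le_iff) auto
  qed
  have "(MAX a. f a) \<le> (MAX a. g a) + c" by (rule 1[of f g]) (rule assms)
  moreover have "(MAX a. g a) \<le> (MAX a. f a) + c" by (rule 1[of g f]) (use assms in \<open>simp add: abs_minus_commute\<close>)
  ultimately show ?thesis by linarith
qed

lemma contraction_fix:
  fixes T :: "('s::finite \<Rightarrow> real) \<Rightarrow> 's \<Rightarrow> real"
  assumes g0: "0 \<le> \<gamma>" and g1: "\<gamma> < 1"
    and c: "\<And>V W x. \<bar>T V x - T W x\<bar> \<le> \<gamma> * dmax V W"
  shows "\<exists>!V. \<forall>s. V s = T V s"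
proof -
  have cd: "dmax (T V) (T W) \<le> \<gamma> * dmax V W" for V W by (rule dmax_le) (rule c)
  define Vn where "Vn n = (T ^^ n) (\<lambda>_. 0)" for n
  have VS: "Vn (Suc n) = T (Vn n)" for n by (simp add: Vn_def)
  define D0 where "D0 = dmax (Vn 1) (Vn 0)"
  have D0: "0 \<le> D0" by (simp add: D0_def dmax_nonneg)
  have dn: "dmax (Vn (Suc n)) (Vn n) \<le> \<gamma>^n * D0" for n
  proof (induction n)
    case 0 thus ?case by (simp add: D0_def)
  next
    case (Suc n)
    have "dmax (Vn (Suc (Suc n))) (Vn (Suc n)) \<le> \<gamma> * dmax (Vn (Suc n)) (Vn n)"
      unfolding VS[of "Suc n"] VS[of n] by (rule cd)
    also have "\<dots> \<le> \<gamma> * (\<gamma>^n * D0)" using Suc g0 by (intro mult_left_mono) auto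
    finally show ?case by simp
  qed
  define df where "df x n = Vn (Suc n) x - Vn n x" for x n
  have dfb: "norm (df x n) \<le> \<gamma>^n * D0" for x n
    using dmax_ge[of "Vn (Suc n)" x "Vn n"] dn[of n] by (simp add: df_def)
  have sg: "summable (\<lambda>n. \<gamma>^n * D0)"
    using g0 g1 by (intro summable_mult2 summable_geometric) auto
  have sdf: "summable (df x)" for x
    by (rule summable_comparison_test'[OF sg]) (use dfb in auto)
  define L where "L x = Vn 0 x + suminf (df x)" for x
  have Vn_eq: "Vn n x = Vn 0 x + (\<Sum>k<n. df x k)" for n x
    by (induction n) (auto simp: df_def)
  have bnd: "\<bar>L x - Vn n x\<bar> \<le> \<gamma>^n * D0 / (1 - \<gamma>)" for x n
  proof -
    have "suminf (df x) = suminf (\<lambda>k. df x (k + n)) + (\<Sum>k<n. df x k)"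
      by (rule suminf_split_initial_segment[OF sdf])
    moreover have "L x - Vn n x = suminf (df x) - (\<Sum>k<n. df x k)"
      unfolding L_def Vn_eq[of n x] by simp
    ultimately have e: "L x - Vn n x = suminf (\<lambda>k. df x (k + n))" by linarith
    have s2: "summable (\<lambda>k. \<gamma>^(k+n) * D0)"
      using sg by (subst summable_iff_shift) simp
    have sa: "summable (\<lambda>k. norm (df x (k + n)))"
      by (rule summable_comparison_test'[OF s2]) (use dfb in auto)
    have "\<bar>suminf (\<lambda>k. df x (k + n))\<bar> \<le> suminf (\<lambda>k. norm (df x (k + n)))"
      using summable_norm[OF sa] by simp
    also have "\<dots> \<le> suminf (\<lambda>k. \<gamma>^(k+n) * D0)"
      by (rule suminf_le[OF _ sa s2]) (use dfb in auto)
    also have "suminf (\<lambda>k. \<gamma>^(k+n) * D0) = \<gamma>^n * D0 / (1 - \<gamma>)"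
    proof -
      have "(\<lambda>k. \<gamma>^(k+n) * D0) = (\<lambda>k. (\<gamma>^n * D0) * \<gamma>^k)" by (auto simp: power_add)
      moreover have "suminf (\<lambda>k. (\<gamma>^n * D0) * \<gamma>^k) = (\<gamma>^n * D0) * (1 / (1 - \<gamma>))"
        using g0 g1 by (subst suminf_mult) (auto simp: suminf_geometric)
      ultimately show ?thesis by simp
    qed
    finally show ?thesis using e by simp
  qed
  have fixL: "L x = T L x" for x
  proof -
    let ?C = "2 * D0 / (1 - \<gamma>)"
    have "\<bar>T L x - L x\<bar> \<le> \<gamma>^n * ?C" for n
    proof -
      have "\<bar>T L x - T (Vn n) x\<bar> \<le> \<gamma> * dmax L (Vn n)" by (rule c)
      also have "\<dots> \<le> \<gamma> * (\<gamma>^n * D0 / (1 - \<gamma>))"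
        using g0 by (intro mult_left_mono dmax_le bnd) auto
      also have "\<dots> \<le> \<gamma>^n * D0 / (1 - \<gamma>)"
        using g0 g1 D0 by (intro mult_left_le_one_le) (auto intro!: divide_nonneg_pos)
      finally have a: "\<bar>T L x - Vn (Suc n) x\<bar> \<le> \<gamma>^n * D0 / (1 - \<gamma>)" by (simp add: VS)
      have b: "\<bar>Vn (Suc n) x - L x\<bar> \<le> \<gamma>^n * D0 / (1 - \<gamma>)"
      proof -
        have "\<bar>L x - Vn (Suc n) x\<bar> \<le> \<gamma>^(Suc n) * D0 / (1 - \<gamma>)" by (rule bnd)
        also have "\<dots> \<le> \<gamma>^n * D0 / (1 - \<gamma>)"
          using g0 g1 D0 by (intro divide_right_mono mult_right_mono) (auto intro: mult_left_le_one_le)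
        finally show ?thesis by (simp add: abs_minus_commute)
      qed
      have "\<gamma>^n * ?C = \<gamma>^n * D0 / (1 - \<gamma>) + \<gamma>^n * D0 / (1 - \<gamma>)" by (simp add: field_simps)
      thus ?thesis using a b by linarith
    qed
    hence "\<bar>T L x - L x\<bar> \<le> 0"
    proof -
      assume h: "\<And>n. \<bar>T L x - L x\<bar> \<le> \<gamma>^n * ?C"
      have "(\<lambda>n. \<gamma>^n * ?C) \<longlonglongrightarrow> 0 * ?C"
        using g0 g1 by (intro tendsto_mult LIMSEQ_power_zero tendsto_const) auto
      thus ?thesis using h by (intro LIMSEQ_le_const[of "\<lambda>n. \<gamma>^n * ?C"]) auto
    qed
    thus ?thesis by simp
  qed
  have uniq: "V = W" if "\<forall>s. V s = T V s" "\<forall>s. W s = T W s" for V W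
  proof -
    have "dmax V W \<le> \<gamma> * dmax V W"
      using cd[of V W] that by (metis ext)
    hence "dmax V W \<le> 0" using g1 dmax_nonneg[of V W]
      by (metis mult_le_cancel_right1 not_le order.strict_trans2 mult.commute)
    hence "\<And>x. \<bar>V x - W x\<bar> \<le> 0" using dmax_ge order_trans by blast
    thus ?thesis by (auto intro: ext)
  qed
  show ?thesis using fixL uniq by blast
qed



lemma sum_pmf_UNIV: "(\<Sum>a\<in>(UNIV::'a::finite set). pmf p a) = 1"
  by (rule sum_pmf_eq_1) auto

lemma rs_V_opt_fix:
  fixes P :: "'s::finite \<Rightarrow> 'a::finite \<Rightarrow> 's pmf"
  assumes crm: "\<forall>s a. convex_risk_measure (sig (P s a))"
    and g0: "0 \<le> \<gamma>" and g1: "\<gamma> < 1"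
  shows "\<forall>s. rs_V_opt sig P r \<gamma> s = (MAX a. r s a - \<gamma> * sig (P s a) (rs_V_opt sig P r \<gamma>))"
proof -
  let ?T = "\<lambda>V s. (MAX a. r s a - \<gamma> * sig (P s a) V)"
  have "\<exists>!V. \<forall>s. V s = ?T V s"
  proof (rule contraction_fix[OF g0 g1])
    fix V W :: "'s \<Rightarrow> real" and x
    show "\<bar>?T V x - ?T W x\<bar> \<le> \<gamma> * dmax V W"
    proof (rule max_lip)
      fix a
      have "\<bar>\<gamma> * sig (P x a) W - \<gamma> * sig (P x a) V\<bar> = \<gamma> * \<bar>sig (P x a) V - sig (P x a) W\<bar>"
        using g0 by (simp add: abs_mult right_diff_distrib[symmetric] abs_minus_commute)
      also have "\<dots> \<le> \<gamma> * dmax V W" using g0 crm_lip_dmax[of "sig (P x a)" V W] crm by (intro mult_left_mono) auto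
      finally show "\<bar>(r x a - \<gamma> * sig (P x a) V) - (r x a - \<gamma> * sig (P x a) W)\<bar> \<le> \<gamma> * dmax V W"
        by simp
    qed
  qed
  hence "\<forall>s. (THE V. \<forall>s. V s = ?T V s) s = ?T (THE V. \<forall>s. V s = ?T V s) s"
    by (rule theI')
  thus ?thesis unfolding rs_V_opt_def .
qed

lemma rs_V_pol_fix:
  fixes P :: "'s::finite \<Rightarrow> 'a::finite \<Rightarrow> 's pmf"
  assumes crm: "\<forall>s a. convex_risk_measure (sig (P s a))"
    and g0: "0 \<le> \<gamma>" and g1: "\<gamma> < 1"
  shows "\<forall>s. rs_V_pol sig P r \<gamma> \<pi> s = (\<Sum>a\<in>UNIV. pmf (\<pi> s) a * (r s a - \<gamma> * sig (P s a) (rs_V_pol sig P r \<gamma> \<pi>)))"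
proof -
  let ?T = "\<lambda>V s. (\<Sum>a\<in>UNIV. pmf (\<pi> s) a * (r s a - \<gamma> * sig (P s a) V))"
  have "\<exists>!V. \<forall>s. V s = ?T V s"
  proof (rule contraction_fix[OF g0 g1])
    fix V W :: "'s \<Rightarrow> real" and x
    have "\<bar>?T V x - ?T W x\<bar> = \<bar>\<Sum>a\<in>UNIV. pmf (\<pi> x) a * (\<gamma> * (sig (P x a) W - sig (P x a) V))\<bar>"
      by (simp add: sum_subtractf[symmetric] algebra_simps)
    also have "\<dots> \<le> (\<Sum>a\<in>UNIV. \<bar>pmf (\<pi> x) a * (\<gamma> * (sig (P x a) W - sig (P x a) V))\<bar>)"
      by (rule sum_abs)
    also have "\<dots> \<le> (\<Sum>a\<in>UNIV. pmf (\<pi> x) a * (\<gamma> * dmax V W))"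
    proof (rule sum_mono)
      fix a
      have "\<bar>sig (P x a) W - sig (P x a) V\<bar> \<le> dmax V W"
        using crm_lip_dmax[of "sig (P x a)" V W] crm by (simp add: abs_minus_commute)
      thus "\<bar>pmf (\<pi> x) a * (\<gamma> * (sig (P x a) W - sig (P x a) V))\<bar> \<le> pmf (\<pi> x) a * (\<gamma> * dmax V W)"
        using g0 by (simp add: abs_mult mult_left_mono)
    qed
    also have "\<dots> = \<gamma> * dmax V W" by (simp add: sum_distrib_right[symmetric] sum_pmf_UNIV)
    finally show "\<bar>?T V x - ?T W x\<bar> \<le> \<gamma> * dmax V W" .
  qed
  hence "\<forall>s. (THE V. \<forall>s. V s = ?T V s) s = ?T (THE V. \<forall>s. V s = ?T V s) s"
    by (rule theI')
  thus ?thesis unfolding rs_V_pol_def .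
qed



lemma pexp_diff: "pexp \<mu> (\<lambda>x. V x - W x) = pexp \<mu> V - pexp \<mu> W"
  unfolding pexp_def by (simp add: right_diff_distrib sum_subtractf)

lemma crm_subgrad:
  fixes \<rho> :: "('s::finite \<Rightarrow> real) \<Rightarrow> real"
  assumes crm: "convex_risk_measure \<rho>" and e: "0 < \<epsilon>"
  shows "\<exists>\<mu>::'s pmf. \<forall>V. \<rho> W - \<epsilon> - pexp \<mu> (\<lambda>x. V x - W x) \<le> \<rho> V"
proof -
  define F where "F v = \<rho> (\<lambda>x. v $ x)" for v :: "real^'s"
  define C where "C = {p :: (real^'s) \<times> real. F (fst p) \<le> snd p}"
  have Fl: "\<bar>F v - F w\<bar> \<le> norm (v - w)" for v w
    unfolding F_def
  proof (rule crm_lip[OF crm])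
    fix x show "\<bar>v $ x - w $ x\<bar> \<le> norm (v - w)"
      using component_le_norm_cart[of "v - w" x] by simp
  qed
  have Fc: "continuous_on UNIV F"
  proof (rule lipschitz_on_continuous_on)
    show "1-lipschitz_on UNIV F"
      by (rule lipschitz_onI) (use Fl in \<open>auto simp: dist_norm dist_real_def\<close>)
  qed
  have "continuous_on UNIV (\<lambda>p::(real^'s)\<times>real. F (fst p))"
    by (rule continuous_on_compose2[OF Fc continuous_on_fst]) (auto intro: continuous_on_id)
  moreover have "continuous_on UNIV (\<lambda>p::(real^'s)\<times>real. snd p)"
    using continuous_on_snd[OF continuous_on_id] .
  ultimately have "closed {p::(real^'s)\<times>real. F (fst p) \<le> snd p}"
    by (rule closed_Collect_le)
  hence clo: "closed C" by (simp only: C_def)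
  have cvx: "convex C"
  proof (rule convexI)
    fix p q :: "(real^'s)\<times>real" and u w :: real
    assume h: "p \<in> C" "q \<in> C" "0 \<le> u" "0 \<le> w" "u + w = 1"
    have w: "w = 1 - u" using h(5) by simp
    have "F (u *\<^sub>R fst p + w *\<^sub>R fst q) = \<rho> (\<lambda>x. u * fst p $ x + (1 - u) * fst q $ x)"
      by (simp add: F_def w)
    also have "\<dots> \<le> u * \<rho> (\<lambda>x. fst p $ x) + (1 - u) * \<rho> (\<lambda>x. fst q $ x)"
      using crm h(3,4,5) unfolding convex_risk_measure_def by auto
    also have "\<dots> \<le> u * snd p + w * snd q"
      using h unfolding C_def w by (intro add_mono mult_left_mono) (auto simp: F_def)
    finally show "u *\<^sub>R p + w *\<^sub>R q \<in> C" by (simp add: C_def)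
  qed
  define w where "w = (\<chi> x. W x)"
  have Fw: "F w = \<rho> W" by (simp add: F_def w_def)
  have nz: "(w, \<rho> W - \<epsilon>) \<notin> C" using e by (simp add: C_def Fw)
  obtain a b where ab: "inner a (w, \<rho> W - \<epsilon>) < b" "\<forall>p\<in>C. inner a p > b"
    using separating_hyperplane_closed_point[OF cvx clo nz] by blast
  obtain a1 a2 where a: "a = (a1, a2)" by (cases a)
  have i1: "inner a1 w + a2 * (\<rho> W - \<epsilon>) < b" using ab(1) by (simp add: a)
  have i2: "inner a1 v + a2 * F v > b" for v
    using ab(2)[rule_format, of "(v, F v)"] by (simp add: a C_def)
  have "a2 * \<epsilon> > 0" using i1 i2[of w] by (simp add: Fw algebra_simps)
  hence a2: "a2 > 0" using e by (simp add: zero_less_mult_iff)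
  define g where "g x = a1 $ x / a2" for x
  have key: "\<rho> W - \<epsilon> - (\<Sum>x\<in>UNIV. g x * (V x - W x)) \<le> \<rho> V" for V
  proof -
    define v where "v = (\<chi> x. V x)"
    have Fv: "F v = \<rho> V" by (simp add: F_def v_def)
    have "inner a1 v - inner a1 w = (\<Sum>x\<in>UNIV. a1 $ x * (V x - W x))"
      by (simp add: inner_vec_def v_def w_def sum_subtractf[symmetric] right_diff_distrib)
    also have "\<dots> = a2 * (\<Sum>x\<in>UNIV. g x * (V x - W x))"
      using a2 by (simp add: g_def sum_distrib_left)
    finally have "inner a1 v - inner a1 w = a2 * (\<Sum>x\<in>UNIV. g x * (V x - W x))" .
    moreover have "a2 * (\<rho> W - \<epsilon>) < a2 * F v + (inner a1 v - inner a1 w)"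
      using i1 i2[of v] by linarith
    hence "a2 * (\<rho> W - \<epsilon>) < a2 * \<rho> V + (inner a1 v - inner a1 w)" by (simp only: Fv)
    ultimately have "a2 * (\<rho> W - \<epsilon> - (\<Sum>x\<in>UNIV. g x * (V x - W x))) < a2 * \<rho> V"
      by (simp add: algebra_simps)
    thus ?thesis using a2 by simp
  qed
  have gnn: "0 \<le> g y" for y
  proof (rule ccontr)
    assume "\<not> 0 \<le> g y"
    hence gy: "g y < 0" by simp
    define k where "k = 2 * \<epsilon> / (- g y)"
    have k: "k > 0" using gy e unfolding k_def by (intro divide_pos_pos) auto
    define V where "V x = W x + (if x = y then k else 0)" for x
    have "(\<Sum>x\<in>UNIV. g x * (V x - W x)) = (\<Sum>x\<in>UNIV. if x = y then g y * k else 0)"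
      by (rule sum.cong) (auto simp: V_def)
    also have "\<dots> = g y * k" by simp
    finally have "(\<Sum>x\<in>UNIV. g x * (V x - W x)) = g y * k" .
    also have "\<dots> = - 2 * \<epsilon>" using gy by (simp add: k_def)
    finally have "\<rho> W + \<epsilon> \<le> \<rho> V" using key[of V] by simp
    moreover have "\<rho> V \<le> \<rho> W" by (rule crm_mono[OF crm]) (use k in \<open>simp add: V_def\<close>)
    ultimately show False using e by simp
  qed
  have gsum: "(\<Sum>x\<in>UNIV. g x) = 1"
  proof -
    have m: "m * ((\<Sum>x\<in>UNIV. g x) - 1) \<ge> - \<epsilon>" for m
    proof -
      have "\<rho> W - \<epsilon> - (\<Sum>x\<in>UNIV. g x * ((W x + m) - W x)) \<le> \<rho> (\<lambda>x. W x + m)" by (rule key)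
      moreover have "(\<Sum>x\<in>UNIV. g x * ((W x + m) - W x)) = m * (\<Sum>x\<in>UNIV. g x)"
        by (simp add: sum_distrib_left mult.commute)
      ultimately show ?thesis using crm_trans[OF crm, of W m] by (simp add: algebra_simps)
    qed
    show ?thesis
    proof (rule ccontr)
      let ?S = "(\<Sum>x\<in>UNIV. g x)"
      assume "?S \<noteq> 1"
      hence ne: "?S - 1 \<noteq> 0" by simp
      have "(- 2 * \<epsilon> / (?S - 1)) * (?S - 1) \<ge> - \<epsilon>" by (rule m)
      thus False using ne e by simp
    qed
  qed
  define \<mu> where "\<mu> = embed_pmf g"
  have pmu: "pmf \<mu> x = g x" for x
    unfolding \<mu>_def
  proof (rule pmf_embed_pmf)
    show "0 \<le> g x" for x by (rule gnn)
    show "(\<integral>\<^sup>+ x. ennreal (g x) \<partial>count_space UNIV) = 1"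
      by (simp add: nn_integral_count_space_finite gnn gsum)
  qed
  show ?thesis
    by (rule exI[of _ \<mu>]) (use key in \<open>simp add: pexp_def pmu\<close>)
qed

lemma penalty_ge: "ereal (- sig \<nu> V - pexp \<mu> V) \<le> penalty sig \<mu> \<nu>"
  unfolding penalty_def by (rule SUP_upper) auto

lemma penalty_le:
  assumes "\<And>V. - sig \<nu> V - pexp \<mu> V \<le> c"
  shows "penalty sig \<mu> \<nu> \<le> ereal c"
  unfolding penalty_def by (rule SUP_least) (use assms in auto)

lemma dual_eps:
  fixes \<nu> :: "'s::finite pmf"
  assumes crm: "convex_risk_measure (sig \<nu>)" and e: "0 < \<epsilon>"
  shows "\<exists>\<mu>. penalty sig \<mu> \<nu> \<le> ereal (- sig \<nu> W - pexp \<mu> W + \<epsilon>)"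
proof -
  obtain \<mu> where \<mu>: "\<And>V. sig \<nu> W - \<epsilon> - pexp \<mu> (\<lambda>x. V x - W x) \<le> sig \<nu> V"
    using crm_subgrad[OF crm e, of W] by blast
  have "penalty sig \<mu> \<nu> \<le> ereal (- sig \<nu> W - pexp \<mu> W + \<epsilon>)"
  proof (rule penalty_le)
    fix V show "- sig \<nu> V - pexp \<mu> V \<le> - sig \<nu> W - pexp \<mu> W + \<epsilon>"
      using \<mu>[of V] by (simp add: pexp_diff)
  qed
  thus ?thesis by blast
qed

lemma dual_attain:
  fixes \<nu> :: "'s::finite pmf"
  assumes crm: "convex_risk_measure (sig \<nu>)"
    and min: "\<And>\<mu>. penalty sig \<mu>0 \<nu> + ereal (pexp \<mu>0 W) \<le> penalty sig \<mu> \<nu> + ereal (pexp \<mu> W)"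
  shows "penalty sig \<mu>0 \<nu> \<le> ereal (- sig \<nu> W - pexp \<mu>0 W)"
proof -
  have H: "penalty sig \<mu>0 \<nu> + ereal (pexp \<mu>0 W) \<le> ereal (- sig \<nu> W) + ereal e" if e: "0 < e" for e
  proof -
    obtain \<mu> where \<mu>: "penalty sig \<mu> \<nu> \<le> ereal (- sig \<nu> W - pexp \<mu> W + e)"
      using dual_eps[where sig=sig and \<nu>=\<nu> and W=W, OF crm e] by blast
    have "penalty sig \<mu>0 \<nu> + ereal (pexp \<mu>0 W) \<le> penalty sig \<mu> \<nu> + ereal (pexp \<mu> W)" by (rule min)
    also have "\<dots> \<le> ereal (- sig \<nu> W - pexp \<mu> W + e) + ereal (pexp \<mu> W)"
      using \<mu> by (rule add_right_mono)
    finally show ?thesis by simp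
  qed
  have "penalty sig \<mu>0 \<nu> + ereal (pexp \<mu>0 W) \<le> ereal (- sig \<nu> W)"
  proof (rule ereal_le_epsilon2)
    fix e :: real assume "0 < e" thus "penalty sig \<mu>0 \<nu> + ereal (pexp \<mu>0 W) \<le> ereal (- sig \<nu> W) + ereal e"
      by (rule H)
  qed
  thus ?thesis
  proof (cases "penalty sig \<mu>0 \<nu>")
    case (real x) thus ?thesis using \<open>_ \<le> ereal (- sig \<nu> W)\<close> by simp
  next
    case PInf thus ?thesis using \<open>_ \<le> ereal (- sig \<nu> W)\<close> by simp
  next
    case MInf thus ?thesis by simp
  qed
qed



lemma series_lower:
  fixes f :: "nat \<Rightarrow> ereal" and l :: "nat \<Rightarrow> real"
  assumes sl: "summable l" and le: "\<And>t. ereal (l t) \<le> f t"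
  shows "ereal (suminf l) \<le> suminf f"
proof -
  define d where "d t = f t - ereal (l t)" for t
  have d0: "0 \<le> d t" for t using le[of t] by (cases "f t") (auto simp: d_def)
  have fd: "f t = d t + ereal (l t)" for t using le[of t] by (cases "f t") (auto simp: d_def)
  have s1: "d sums (suminf d)" using summable_ereal_pos[OF d0] by (rule summable_sums)
  have s2: "(\<lambda>t. ereal (l t)) sums ereal (suminf l)"
    using summable_sums[OF sl] by (simp add: sums_ereal)
  have dnn: "0 \<le> suminf d" using summable_ereal_pos[OF d0] d0 by (rule suminf_nonneg)
  have "f sums (suminf d + ereal (suminf l))"
    unfolding sums_def
  proof -
    have "(\<lambda>n. \<Sum>i<n. f i) = (\<lambda>n. (\<Sum>i<n. d i) + (\<Sum>i<n. ereal (l i)))"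
      by (simp add: fd sum.distrib)
    moreover have "((\<lambda>n. (\<Sum>i<n. d i) + (\<Sum>i<n. ereal (l i))) \<longlonglongrightarrow> suminf d + ereal (suminf l))"
      by (rule tendsto_add_ereal_nonneg) (use dnn s1 s2 in \<open>auto simp: sums_def\<close>)
    ultimately show "(\<lambda>n. \<Sum>i<n. f i) \<longlonglongrightarrow> suminf d + ereal (suminf l)" by simp
  qed
  hence "suminf f = suminf d + ereal (suminf l)" by (rule sums_unique[symmetric])
  thus ?thesis using dnn by (simp add: add_increasing)
qed

lemma series_upper:
  fixes f :: "nat \<Rightarrow> ereal" and l u :: "nat \<Rightarrow> real"
  assumes sl: "summable l" and su: "summable u"
    and le: "\<And>t. ereal (l t) \<le> f t" and ue: "\<And>t. f t \<le> ereal (u t)"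
  shows "suminf f \<le> ereal (suminf u)"
proof -
  define k where "k t = real_of_ereal (f t)" for t
  have fk: "f t = ereal (k t)" for t using le[of t] ue[of t] by (cases "f t") (auto simp: k_def)
  have lk: "l t \<le> k t" "k t \<le> u t" for t using le[of t] ue[of t] by (auto simp: fk)
  have "summable (\<lambda>t. u t - l t)" using su sl by (rule summable_diff)
  hence "summable (\<lambda>t. k t - l t)"
    by (rule summable_comparison_test'[where N=0]) (use lk in auto)
  hence s3: "summable (\<lambda>t. (k t - l t) + l t)" using sl by (rule summable_add)
  have sk: "summable k" using s3 by (simp only: diff_add_cancel)
  have s4: "(\<lambda>t. ereal (k t)) sums ereal (suminf k)"
    unfolding sums_ereal by (rule summable_sums[OF sk])
  have feq: "f = (\<lambda>t. ereal (k t))" by (rule ext) (rule fk)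
  have "suminf f = ereal (suminf k)"
    unfolding feq by (rule sums_unique[OF s4, symmetric])
  also have "\<dots> \<le> ereal (suminf u)" using suminf_le[OF _ sk su] lk by auto
  finally show ?thesis .
qed

lemma ereal_wsum_lower:
  fixes F :: "'b \<Rightarrow> ereal"
  assumes "finite A" "\<And>h. h \<in> A \<Longrightarrow> ereal (y h) \<le> F h" "\<And>h. 0 \<le> w h"
  shows "ereal (\<Sum>h\<in>A. w h * y h) \<le> (\<Sum>h\<in>A. ereal (w h) * F h)"
proof -
  have "ereal (\<Sum>h\<in>A. w h * y h) = (\<Sum>h\<in>A. ereal (w h) * ereal (y h))" by simp
  also have "\<dots> \<le> (\<Sum>h\<in>A. ereal (w h) * F h)"
    by (rule sum_mono, rule ereal_mult_left_mono) (use assms in auto)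
  finally show ?thesis .
qed

lemma ereal_wsum_upper:
  fixes F :: "'b \<Rightarrow> ereal"
  assumes "finite A" "\<And>h. h \<in> A \<Longrightarrow> F h \<le> ereal (y h)" "\<And>h. 0 \<le> w h"
  shows "(\<Sum>h\<in>A. ereal (w h) * F h) \<le> ereal (\<Sum>h\<in>A. w h * y h)"
proof -
  have "(\<Sum>h\<in>A. ereal (w h) * F h) \<le> (\<Sum>h\<in>A. ereal (w h) * ereal (y h))"
    by (rule sum_mono, rule ereal_mult_left_mono) (use assms in auto)
  also have "\<dots> = ereal (\<Sum>h\<in>A. w h * y h)" by simp
  finally show ?thesis .
qed



definition wsum :: "'b pmf \<Rightarrow> ('b \<Rightarrow> real) \<Rightarrow> real" where
  "wsum p f = (\<Sum>h\<in>set_pmf p. pmf p h * f h)"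

lemma exp_sum: "finite (set_pmf p) \<Longrightarrow> measure_pmf.expectation p f = wsum p f"
  unfolding wsum_def
  by (subst integral_measure_pmf_real[of "set_pmf p"]) (auto simp: mult.commute)

lemma exp_UNIV: "measure_pmf.expectation (p :: 'b::finite pmf) f = (\<Sum>x\<in>UNIV. pmf p x * f x)"
  by (subst integral_measure_pmf_real[of UNIV]) (auto simp: mult.commute)

lemma traj_finite:
  fixes \<mu> :: "('s::finite, 'a::finite) hpolicy"
  shows "finite (set_pmf (traj \<mu> Q s t))"
proof (induction t)
  case 0 show ?case by simp
next
  case (Suc t)
  have "set_pmf (traj \<mu> Q s (Suc t)) \<subseteq> (\<lambda>(h, x). h @ [x]) ` (set_pmf (traj \<mu> Q s t) \<times> UNIV)"
    by (auto simp: set_bind_pmf)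
  moreover have "finite ((\<lambda>(h, x). h @ [x]) ` (set_pmf (traj \<mu> Q s t) \<times> (UNIV :: ('s \<times> 'a) set)))"
    using Suc by auto
  ultimately show ?case by (rule finite_subset)
qed

lemma traj_nonempty: "h \<in> set_pmf (traj \<mu> Q s t) \<Longrightarrow> h \<noteq> []"
  by (cases t) auto

lemma wsum_traj0:
  fixes \<mu> :: "('s::finite, 'a::finite) hpolicy"
  shows "wsum (traj \<mu> Q s 0) (\<lambda>h. f (last h)) = (\<Sum>a\<in>UNIV. pmf (\<mu> [] s) a * f (s, a))"
proof -
  have "wsum (traj \<mu> Q s 0) (\<lambda>h. f (last h)) = measure_pmf.expectation (traj \<mu> Q s 0) (\<lambda>h. f (last h))"
    by (rule exp_sum[symmetric]) (rule traj_finite)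
  also have "\<dots> = measure_pmf.expectation (\<mu> [] s) (\<lambda>a. f (s, a))" by simp
  also have "\<dots> = (\<Sum>a\<in>UNIV. pmf (\<mu> [] s) a * f (s, a))" by (rule exp_UNIV)
  finally show ?thesis .
qed

lemma wsum_trajS:
  fixes \<mu> :: "('s::finite, 'a::finite) hpolicy"
  shows "wsum (traj \<mu> Q s (Suc t)) (\<lambda>h. f (last h)) =
         wsum (traj \<mu> Q s t) (\<lambda>h. \<Sum>s'\<in>UNIV. pmf (Q t (fst (last h)) (snd (last h))) s' *
                                   (\<Sum>a\<in>UNIV. pmf (\<mu> h s') a * f (s', a)))"
proof -
  define K where "K h = bind_pmf (Q t (fst (last h)) (snd (last h)))
                        (\<lambda>s'. map_pmf (\<lambda>a'. h @ [(s', a')]) (\<mu> h s'))" for h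
  have tS: "traj \<mu> Q s (Suc t) = bind_pmf (traj \<mu> Q s t) K" unfolding K_def by simp
  have fK: "finite (set_pmf (K h))" for h
  proof -
    have "set_pmf (K h) \<subseteq> (\<lambda>x. h @ [x]) ` UNIV" by (auto simp: K_def)
    thus ?thesis by (rule finite_subset) simp
  qed
  have inner: "measure_pmf.expectation (K h) (\<lambda>h. f (last h)) =
      (\<Sum>s'\<in>UNIV. pmf (Q t (fst (last h)) (snd (last h))) s' * (\<Sum>a\<in>UNIV. pmf (\<mu> h s') a * f (s', a)))" for h
  proof -
    have "measure_pmf.expectation (K h) (\<lambda>h. f (last h)) =
        (\<Sum>s'\<in>UNIV. pmf (Q t (fst (last h)) (snd (last h))) s' *\<^sub>R
            measure_pmf.expectation (map_pmf (\<lambda>a'. h @ [(s', a')]) (\<mu> h s')) (\<lambda>h. f (last h)))"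
      unfolding K_def by (rule pmf_expectation_bind) auto
    also have "\<dots> = (\<Sum>s'\<in>UNIV. pmf (Q t (fst (last h)) (snd (last h))) s' * (\<Sum>a\<in>UNIV. pmf (\<mu> h s') a * f (s', a)))"
      by (simp add: exp_UNIV)
    finally show ?thesis .
  qed
  have "wsum (traj \<mu> Q s (Suc t)) (\<lambda>h. f (last h)) = measure_pmf.expectation (traj \<mu> Q s (Suc t)) (\<lambda>h. f (last h))"
    by (rule exp_sum[symmetric]) (rule traj_finite)
  also have "\<dots> = (\<Sum>h\<in>set_pmf (traj \<mu> Q s t). pmf (traj \<mu> Q s t) h *\<^sub>R measure_pmf.expectation (K h) (\<lambda>h. f (last h)))"
    unfolding tS by (rule pmf_expectation_bind) (auto simp: traj_finite fK)
  also have "\<dots> = wsum (traj \<mu> Q s t) (\<lambda>h. \<Sum>s'\<in>UNIV. pmf (Q t (fst (last h)) (snd (last h))) s' *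
                                   (\<Sum>a\<in>UNIV. pmf (\<mu> h s') a * f (s', a)))"
    by (simp add: wsum_def inner)
  finally show ?thesis .
qed

lemma wsum_mono: "(\<And>h. h \<in> set_pmf p \<Longrightarrow> f h \<le> g h) \<Longrightarrow> wsum p f \<le> wsum p g"
  unfolding wsum_def by (rule sum_mono) (auto intro: mult_left_mono)

lemma wsum_const: "finite (set_pmf p) \<Longrightarrow> wsum p (\<lambda>_. c) = c"
  unfolding wsum_def by (simp add: sum_distrib_right[symmetric] sum_pmf_eq_1)

lemma wsum_diff: "wsum p (\<lambda>h. f h - g h) = wsum p f - wsum p g"
  unfolding wsum_def by (simp add: right_diff_distrib sum_subtractf)

lemma wsum_add: "wsum p (\<lambda>h. f h + g h) = wsum p f + wsum p g"
  unfolding wsum_def by (simp add: distrib_left sum.distrib)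

lemma wsum_cmult: "wsum p (\<lambda>h. c * f h) = c * wsum p f"
  unfolding wsum_def by (simp add: sum_distrib_left algebra_simps)

lemma wsum_abs: "finite (set_pmf p) \<Longrightarrow> (\<And>h. h \<in> set_pmf p \<Longrightarrow> \<bar>f h\<bar> \<le> B) \<Longrightarrow> \<bar>wsum p f\<bar> \<le> B"
proof -
  assume fin: "finite (set_pmf p)" and b: "\<And>h. h \<in> set_pmf p \<Longrightarrow> \<bar>f h\<bar> \<le> B"
  have "wsum p f \<le> wsum p (\<lambda>_. B)" by (rule wsum_mono) (use b in \<open>force simp: abs_le_iff\<close>)
  moreover have "wsum p (\<lambda>_. - B) \<le> wsum p f" by (rule wsum_mono) (use b in \<open>force simp: abs_le_iff\<close>)
  ultimately show ?thesis using wsum_const[OF fin, of B] wsum_const[OF fin, of "-B"] by linarith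
qed



lemma pmf_sum_abs:
  fixes p :: "'b::finite pmf"
  assumes "\<And>a. \<bar>f a\<bar> \<le> c"
  shows "\<bar>\<Sum>a\<in>UNIV. pmf p a * f a\<bar> \<le> c"
proof -
  have "\<bar>\<Sum>a\<in>UNIV. pmf p a * f a\<bar> \<le> (\<Sum>a\<in>UNIV. \<bar>pmf p a * f a\<bar>)" by (rule sum_abs)
  also have "\<dots> \<le> (\<Sum>a\<in>UNIV. pmf p a * c)"
  proof (rule sum_mono)
    fix a
    have "\<bar>pmf p a * f a\<bar> = pmf p a * \<bar>f a\<bar>" by (simp add: abs_mult)
    also have "\<dots> \<le> pmf p a * c" by (rule mult_left_mono[OF assms]) simp
    finally show "\<bar>pmf p a * f a\<bar> \<le> pmf p a * c" .
  qed
  also have "\<dots> = c" by (simp add: sum_distrib_right[symmetric] sum_pmf_UNIV)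
  finally show ?thesis .
qed

lemma telescope_gamma:
  fixes x :: "nat \<Rightarrow> real"
  assumes g0: "0 \<le> \<gamma>" and g1: "\<gamma> < 1" and b: "\<And>t. \<bar>x t\<bar> \<le> B"
  shows "(\<lambda>t. \<gamma>^t * (x t - \<gamma> * x (Suc t))) sums x 0"
proof -
  define y where "y t = \<gamma>^t * x t" for t
  have "(\<lambda>t. \<gamma>^t) \<longlonglongrightarrow> 0" by (rule LIMSEQ_power_zero) (use g0 g1 in auto)
  hence l0: "(\<lambda>t. \<gamma>^t * B) \<longlonglongrightarrow> 0" using tendsto_mult_left[of "\<lambda>t. \<gamma>^t" 0 sequentially B] by (simp add: mult.commute)
  have nb: "norm (y t) \<le> \<gamma>^t * B" for t
  proof -
    have "norm (y t) = \<gamma>^t * \<bar>x t\<bar>" using g0 by (simp add: y_def abs_mult)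
    also have "\<dots> \<le> \<gamma>^t * B" by (rule mult_left_mono[OF b]) (use g0 in simp)
    finally show ?thesis .
  qed
  have "y \<longlonglongrightarrow> 0"
    by (rule Lim_null_comparison[OF always_eventually l0]) (rule allI, rule nb)
  hence "(\<lambda>t. y t - y (Suc t)) sums (y 0 - 0)" by (rule telescope_sums')
  moreover have "(\<lambda>t. y t - y (Suc t)) = (\<lambda>t. \<gamma>^t * (x t - \<gamma> * x (Suc t)))"
    by (rule ext) (simp add: y_def algebra_simps)
  ultimately show ?thesis by (simp add: y_def)
qed

lemma geo_sums:
  fixes c :: real
  assumes g0: "0 \<le> \<gamma>" and g1: "\<gamma> < 1"
  shows "(\<lambda>t. \<gamma>^t * c) sums (c / (1 - \<gamma>))"
proof -
  have "(\<lambda>t. \<gamma>^t) sums (1 / (1 - \<gamma>))" using g0 g1 by (intro geometric_sums) auto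
  from sums_mult2[OF this, of c] show ?thesis by simp
qed

lemma Max_abs_ge:
  fixes f :: "'b::finite \<Rightarrow> real"
  shows "\<bar>f x\<bar> \<le> Max (range (\<lambda>x. \<bar>f x\<bar>))"
  by (rule Max_ge) auto

lemma pexp_abs: "\<bar>pexp (\<nu> :: 's::finite pmf) W\<bar> \<le> Max (range (\<lambda>x. \<bar>W x\<bar>))"
  unfolding pexp_def by (rule pmf_sum_abs) (rule Max_abs_ge)



lemma ret_lower:
  fixes \<mu> :: "('s::finite, 'a::finite) hpolicy" and W :: "'s \<Rightarrow> real" and g :: "'s \<Rightarrow> 'a \<Rightarrow> real"
  assumes g0: "0 \<le> \<gamma>" and g1: "\<gamma> < 1"
    and L1: "\<And>t h. h \<in> set_pmf (traj \<mu> Q s t) \<Longrightarrow>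
       ereal (g (fst (last h)) (snd (last h)) - \<gamma> * pexp (Q t (fst (last h)) (snd (last h))) W)
         \<le> stage sig P r \<gamma> Q t (last h)"
    and L2: "\<And>h x. h \<noteq> [] \<Longrightarrow> W x \<le> (\<Sum>a\<in>UNIV. pmf (\<mu> h x) a * g x a)"
  shows "ereal (\<Sum>a\<in>UNIV. pmf (\<mu> [] s) a * g s a) \<le> ret sig P r \<gamma> \<mu> Q s"
proof -
  let ?tr = "traj \<mu> Q s"
  define x where "x t = (case t of 0 \<Rightarrow> (\<Sum>a\<in>UNIV. pmf (\<mu> [] s) a * g s a)
      | Suc k \<Rightarrow> wsum (?tr k) (\<lambda>h. pexp (Q k (fst (last h)) (snd (last h))) W))" for t
  define G where "G t = wsum (?tr t) (\<lambda>h. g (fst (last h)) (snd (last h)))" for t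
  define e where "e t = (\<Sum>h\<in>set_pmf (?tr t). ereal (pmf (?tr t) h) * stage sig P r \<gamma> Q t (last h))" for t
  have x0: "x 0 = (\<Sum>a\<in>UNIV. pmf (\<mu> [] s) a * g s a)" by (simp add: x_def)
  have xS: "x (Suc k) = wsum (?tr k) (\<lambda>h. pexp (Q k (fst (last h)) (snd (last h))) W)" for k
    by (simp add: x_def)
  have xG: "x t \<le> G t" for t
  proof (cases t)
    case 0
    have "G 0 = (\<Sum>a\<in>UNIV. pmf (\<mu> [] s) a * g s a)"
      unfolding G_def using wsum_traj0[of \<mu> Q s "\<lambda>p. g (fst p) (snd p)"] by simp
    thus ?thesis using 0 x0 by simp
  next
    case (Suc k)
    have "G (Suc k) = wsum (?tr k) (\<lambda>h. \<Sum>s'\<in>UNIV. pmf (Q k (fst (last h)) (snd (last h))) s' *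
                                   (\<Sum>a\<in>UNIV. pmf (\<mu> h s') a * g s' a))"
      unfolding G_def using wsum_trajS[of \<mu> Q s k "\<lambda>p. g (fst p) (snd p)"] by simp
    also have "\<dots> \<ge> x (Suc k)"
      unfolding xS pexp_def
    proof (rule wsum_mono)
      fix h assume "h \<in> set_pmf (?tr k)"
      hence hne: "h \<noteq> []" by (rule traj_nonempty)
      show "(\<Sum>s'\<in>UNIV. pmf (Q k (fst (last h)) (snd (last h))) s' * W s')
          \<le> (\<Sum>s'\<in>UNIV. pmf (Q k (fst (last h)) (snd (last h))) s' * (\<Sum>a\<in>UNIV. pmf (\<mu> h s') a * g s' a))"
        by (rule sum_mono, rule mult_left_mono) (use L2[OF hne] in auto)
    qed
    finally show ?thesis using Suc by simp
  qed
  have bx: "\<bar>x t\<bar> \<le> Max (range (\<lambda>p. \<bar>g (fst p) (snd p)\<bar>)) + Max (range (\<lambda>x. \<bar>W x\<bar>))" for t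
  proof (cases t)
    case 0
    have "\<bar>x 0\<bar> \<le> Max (range (\<lambda>p. \<bar>g (fst p) (snd p)\<bar>))"
      unfolding x0
    proof (rule pmf_sum_abs)
      fix a show "\<bar>g s a\<bar> \<le> Max (range (\<lambda>p. \<bar>g (fst p) (snd p)\<bar>))"
        using Max_abs_ge[of "\<lambda>p. g (fst p) (snd p)" "(s, a)"] by simp
    qed
    moreover have "0 \<le> Max (range (\<lambda>x. \<bar>W x\<bar>))" using Max_abs_ge[of W s] by linarith
    ultimately show ?thesis using 0 by simp
  next
    case (Suc k)
    have "\<bar>x (Suc k)\<bar> \<le> Max (range (\<lambda>x. \<bar>W x\<bar>))"
      unfolding xS by (rule wsum_abs[OF traj_finite]) (rule pexp_abs)
    moreover have "0 \<le> Max (range (\<lambda>p. \<bar>g (fst p) (snd p)\<bar>))"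
      using Max_abs_ge[of "\<lambda>p. g (fst p) (snd p)" "(s, undefined)"] by linarith
    ultimately show ?thesis using Suc by simp
  qed
  have el: "ereal (x t - \<gamma> * x (Suc t)) \<le> e t" for t
  proof -
    have "ereal (wsum (?tr t) (\<lambda>h. g (fst (last h)) (snd (last h)) - \<gamma> * pexp (Q t (fst (last h)) (snd (last h))) W)) \<le> e t"
      unfolding e_def wsum_def by (rule ereal_wsum_lower[OF traj_finite]) (use L1 in auto)
    moreover have "wsum (?tr t) (\<lambda>h. g (fst (last h)) (snd (last h)) - \<gamma> * pexp (Q t (fst (last h)) (snd (last h))) W)
        = G t - \<gamma> * x (Suc t)"
      by (simp only: wsum_diff wsum_cmult G_def xS)
    moreover have "x t - \<gamma> * x (Suc t) \<le> G t - \<gamma> * x (Suc t)" using xG[of t] by simp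
    ultimately show ?thesis by (metis ereal_less_eq(3) order_trans)
  qed
  have fl: "ereal (\<gamma>^t * (x t - \<gamma> * x (Suc t))) \<le> ereal (\<gamma>^t) * e t" for t
  proof -
    have "ereal (\<gamma>^t * (x t - \<gamma> * x (Suc t))) = ereal (\<gamma>^t) * ereal (x t - \<gamma> * x (Suc t))" by simp
    also have "\<dots> \<le> ereal (\<gamma>^t) * e t" by (rule ereal_mult_left_mono[OF el]) (use g0 in simp)
    finally show ?thesis .
  qed
  have ts: "(\<lambda>t. \<gamma>^t * (x t - \<gamma> * x (Suc t))) sums x 0"
    by (rule telescope_gamma[OF g0 g1 bx])
  have "ereal (suminf (\<lambda>t. \<gamma>^t * (x t - \<gamma> * x (Suc t)))) \<le> suminf (\<lambda>t. ereal (\<gamma>^t) * e t)"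
    by (rule series_lower[OF sums_summable[OF ts] fl])
  moreover have "suminf (\<lambda>t. \<gamma>^t * (x t - \<gamma> * x (Suc t))) = x 0" using ts by (rule sums_unique[symmetric])
  moreover have "ret sig P r \<gamma> \<mu> Q s = suminf (\<lambda>t. ereal (\<gamma>^t) * e t)" by (simp add: ret_def e_def)
  ultimately show ?thesis using x0 by simp
qed


lemma ret_upper:
  fixes \<mu> :: "('s::finite, 'a::finite) hpolicy" and W :: "'s \<Rightarrow> real" and g :: "'s \<Rightarrow> 'a \<Rightarrow> real"
  assumes g0: "0 \<le> \<gamma>" and g1: "\<gamma> < 1"
    and L1: "\<And>t h. h \<in> set_pmf (traj \<mu> Q s t) \<Longrightarrow>
       stage sig P r \<gamma> Q t (last h) \<le>
       ereal (g (fst (last h)) (snd (last h)) - \<gamma> * pexp (Q t (fst (last h)) (snd (last h))) W + c)"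
    and Ll: "\<And>t h. h \<in> set_pmf (traj \<mu> Q s t) \<Longrightarrow> ereal (- M) \<le> stage sig P r \<gamma> Q t (last h)"
    and L2: "\<And>h x. h \<noteq> [] \<Longrightarrow> (\<Sum>a\<in>UNIV. pmf (\<mu> h x) a * g x a) \<le> W x"
  shows "ret sig P r \<gamma> \<mu> Q s \<le> ereal ((\<Sum>a\<in>UNIV. pmf (\<mu> [] s) a * g s a) + c / (1 - \<gamma>))"
proof -
  let ?tr = "traj \<mu> Q s"
  define x where "x t = (case t of 0 \<Rightarrow> (\<Sum>a\<in>UNIV. pmf (\<mu> [] s) a * g s a)
      | Suc k \<Rightarrow> wsum (?tr k) (\<lambda>h. pexp (Q k (fst (last h)) (snd (last h))) W))" for t
  define G where "G t = wsum (?tr t) (\<lambda>h. g (fst (last h)) (snd (last h)))" for t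
  define e where "e t = (\<Sum>h\<in>set_pmf (?tr t). ereal (pmf (?tr t) h) * stage sig P r \<gamma> Q t (last h))" for t
  have x0: "x 0 = (\<Sum>a\<in>UNIV. pmf (\<mu> [] s) a * g s a)" by (simp add: x_def)
  have xS: "x (Suc k) = wsum (?tr k) (\<lambda>h. pexp (Q k (fst (last h)) (snd (last h))) W)" for k
    by (simp add: x_def)
  have xG: "G t \<le> x t" for t
  proof (cases t)
    case 0
    have "G 0 = (\<Sum>a\<in>UNIV. pmf (\<mu> [] s) a * g s a)"
      unfolding G_def using wsum_traj0[of \<mu> Q s "\<lambda>p. g (fst p) (snd p)"] by simp
    thus ?thesis using 0 x0 by simp
  next
    case (Suc k)
    have "G (Suc k) = wsum (?tr k) (\<lambda>h. \<Sum>s'\<in>UNIV. pmf (Q k (fst (last h)) (snd (last h))) s' *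
                                   (\<Sum>a\<in>UNIV. pmf (\<mu> h s') a * g s' a))"
      unfolding G_def using wsum_trajS[of \<mu> Q s k "\<lambda>p. g (fst p) (snd p)"] by simp
    also have "\<dots> \<le> x (Suc k)"
      unfolding xS pexp_def
    proof (rule wsum_mono)
      fix h assume "h \<in> set_pmf (?tr k)"
      hence hne: "h \<noteq> []" by (rule traj_nonempty)
      show "(\<Sum>s'\<in>UNIV. pmf (Q k (fst (last h)) (snd (last h))) s' * (\<Sum>a\<in>UNIV. pmf (\<mu> h s') a * g s' a))
          \<le> (\<Sum>s'\<in>UNIV. pmf (Q k (fst (last h)) (snd (last h))) s' * W s')"
        by (rule sum_mono, rule mult_left_mono) (use L2[OF hne] in auto)
    qed
    finally show ?thesis using Suc by simp
  qed
  have bx: "\<bar>x t\<bar> \<le> Max (range (\<lambda>p. \<bar>g (fst p) (snd p)\<bar>)) + Max (range (\<lambda>x. \<bar>W x\<bar>))" for t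
  proof (cases t)
    case 0
    have "\<bar>x 0\<bar> \<le> Max (range (\<lambda>p. \<bar>g (fst p) (snd p)\<bar>))"
      unfolding x0
    proof (rule pmf_sum_abs)
      fix a show "\<bar>g s a\<bar> \<le> Max (range (\<lambda>p. \<bar>g (fst p) (snd p)\<bar>))"
        using Max_abs_ge[of "\<lambda>p. g (fst p) (snd p)" "(s, a)"] by simp
    qed
    moreover have "0 \<le> Max (range (\<lambda>x. \<bar>W x\<bar>))" using Max_abs_ge[of W s] by linarith
    ultimately show ?thesis using 0 by simp
  next
    case (Suc k)
    have "\<bar>x (Suc k)\<bar> \<le> Max (range (\<lambda>x. \<bar>W x\<bar>))"
      unfolding xS by (rule wsum_abs[OF traj_finite]) (rule pexp_abs)
    moreover have "0 \<le> Max (range (\<lambda>p. \<bar>g (fst p) (snd p)\<bar>))"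
      using Max_abs_ge[of "\<lambda>p. g (fst p) (snd p)" "(s, undefined)"] by linarith
    ultimately show ?thesis using Suc by simp
  qed
  have el: "e t \<le> ereal (x t - \<gamma> * x (Suc t) + c)" for t
  proof -
    have "e t \<le> ereal (wsum (?tr t) (\<lambda>h. g (fst (last h)) (snd (last h)) - \<gamma> * pexp (Q t (fst (last h)) (snd (last h))) W + c))"
      unfolding e_def wsum_def by (rule ereal_wsum_upper[OF traj_finite]) (use L1 in auto)
    moreover have "wsum (?tr t) (\<lambda>h. g (fst (last h)) (snd (last h)) - \<gamma> * pexp (Q t (fst (last h)) (snd (last h))) W + c)
        = G t - \<gamma> * x (Suc t) + c"
      by (simp only: wsum_add wsum_diff wsum_cmult G_def xS wsum_const[OF traj_finite])
    moreover have "G t - \<gamma> * x (Suc t) + c \<le> x t - \<gamma> * x (Suc t) + c" using xG[of t] by simp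
    ultimately show ?thesis by (metis ereal_less_eq(3) order_trans)
  qed
  have eM: "ereal (- M) \<le> e t" for t
  proof -
    have "ereal (wsum (?tr t) (\<lambda>h. - M)) \<le> e t"
      unfolding e_def wsum_def by (rule ereal_wsum_lower[OF traj_finite]) (use Ll in auto)
    thus ?thesis by (simp only: wsum_const[OF traj_finite])
  qed
  have fu: "ereal (\<gamma>^t) * e t \<le> ereal (\<gamma>^t * (x t - \<gamma> * x (Suc t)) + \<gamma>^t * c)" for t
  proof -
    have "ereal (\<gamma>^t) * e t \<le> ereal (\<gamma>^t) * ereal (x t - \<gamma> * x (Suc t) + c)"
      by (rule ereal_mult_left_mono[OF el]) (use g0 in simp)
    also have "\<dots> = ereal (\<gamma>^t * (x t - \<gamma> * x (Suc t)) + \<gamma>^t * c)" by (simp add: algebra_simps)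
    finally show ?thesis .
  qed
  have fl: "ereal (\<gamma>^t * (- M)) \<le> ereal (\<gamma>^t) * e t" for t
  proof -
    have "ereal (\<gamma>^t * (- M)) = ereal (\<gamma>^t) * ereal (- M)" by simp
    also have "\<dots> \<le> ereal (\<gamma>^t) * e t" by (rule ereal_mult_left_mono[OF eM]) (use g0 in simp)
    finally show ?thesis .
  qed
  have ts: "(\<lambda>t. \<gamma>^t * (x t - \<gamma> * x (Suc t)) + \<gamma>^t * c) sums (x 0 + c / (1 - \<gamma>))"
    by (rule sums_add[OF telescope_gamma[OF g0 g1 bx] geo_sums[OF g0 g1]])
  have "suminf (\<lambda>t. ereal (\<gamma>^t) * e t) \<le> ereal (suminf (\<lambda>t. \<gamma>^t * (x t - \<gamma> * x (Suc t)) + \<gamma>^t * c))"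
    by (rule series_upper[OF sums_summable[OF geo_sums[OF g0 g1]] sums_summable[OF ts] fl fu])
  moreover have "suminf (\<lambda>t. \<gamma>^t * (x t - \<gamma> * x (Suc t)) + \<gamma>^t * c) = x 0 + c / (1 - \<gamma>)"
    using ts by (rule sums_unique[symmetric])
  moreover have "ret sig P r \<gamma> \<mu> Q s = suminf (\<lambda>t. ereal (\<gamma>^t) * e t)" by (simp add: ret_def e_def)
  ultimately show ?thesis using x0 by simp
qed



lemma sum_return_pmf: "(\<Sum>a\<in>(UNIV::'a::finite set). pmf (return_pmf b) a * k a) = k b"
proof -
  have "(\<Sum>a\<in>(UNIV::'a set). pmf (return_pmf b) a * k a) = (\<Sum>a\<in>UNIV. if a = b then k b else 0)"
    by (rule sum.cong) (auto simp: pmf_return)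
  also have "\<dots> = k b" by simp
  finally show ?thesis .
qed

lemma pmf_wavg_le:
  fixes p :: "'a::finite pmf"
  assumes "\<And>a. f a \<le> c"
  shows "(\<Sum>a\<in>UNIV. pmf p a * f a) \<le> c"
proof -
  have "(\<Sum>a\<in>UNIV. pmf p a * f a) \<le> (\<Sum>a\<in>UNIV. pmf p a * c)"
    by (rule sum_mono, rule mult_left_mono) (use assms in auto)
  also have "\<dots> = c" by (simp add: sum_distrib_right[symmetric] sum_pmf_UNIV)
  finally show ?thesis .
qed

context
  fixes P :: "'s::finite \<Rightarrow> 'a::finite \<Rightarrow> 's pmf"
    and sig :: "'s pmf \<Rightarrow> ('s \<Rightarrow> real) \<Rightarrow> real"
    and r :: "'s \<Rightarrow> 'a \<Rightarrow> real"
    and \<gamma> :: real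
  assumes crm: "\<forall>s a. convex_risk_measure (sig (P s a))"
    and rew: "\<forall>s a. 0 \<le> r s a \<and> r s a \<le> 1"
    and g0: "0 \<le> \<gamma>" and g1: "\<gamma> < 1"
begin

lemma stage_lower:
  "ereal (r x a - \<gamma> * sig (P x a) W - \<gamma> * pexp (Q t x a) W) \<le> stage sig P r \<gamma> Q t (x, a)"
proof -
  have "ereal \<gamma> * ereal (- sig (P x a) W - pexp (Q t x a) W) \<le> ereal \<gamma> * penalty sig (Q t x a) (P x a)"
    by (rule ereal_mult_left_mono[OF penalty_ge]) (use g0 in simp)
  hence "ereal (r x a) + ereal \<gamma> * ereal (- sig (P x a) W - pexp (Q t x a) W) \<le> stage sig P r \<gamma> Q t (x, a)"
    unfolding stage_def by (simp only: fst_conv snd_conv) (rule add_left_mono)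
  moreover have "ereal (r x a - \<gamma> * sig (P x a) W - \<gamma> * pexp (Q t x a) W) = ereal (r x a) + ereal \<gamma> * ereal (- sig (P x a) W - pexp (Q t x a) W)"
    by (simp add: algebra_simps)
  ultimately show ?thesis by (simp only:)
qed

lemma stage_upper:
  assumes "penalty sig (Q t x a) (P x a) \<le> ereal (- sig (P x a) W - pexp (Q t x a) W + e)"
  shows "stage sig P r \<gamma> Q t (x, a) \<le> ereal (r x a - \<gamma> * sig (P x a) W - \<gamma> * pexp (Q t x a) W + \<gamma> * e)"
proof -
  have "ereal \<gamma> * penalty sig (Q t x a) (P x a) \<le> ereal \<gamma> * ereal (- sig (P x a) W - pexp (Q t x a) W + e)"
    by (rule ereal_mult_left_mono[OF assms]) (use g0 in simp)
  hence "stage sig P r \<gamma> Q t (x, a) \<le> ereal (r x a) + ereal \<gamma> * ereal (- sig (P x a) W - pexp (Q t x a) W + e)"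
    unfolding stage_def by (simp only: fst_conv snd_conv) (rule add_left_mono)
  moreover have "ereal (r x a - \<gamma> * sig (P x a) W - \<gamma> * pexp (Q t x a) W + \<gamma> * e) = ereal (r x a) + ereal \<gamma> * ereal (- sig (P x a) W - pexp (Q t x a) W + e)"
    by (simp add: algebra_simps)
  ultimately show ?thesis by (simp only:)
qed

definition "Mb = (\<Sum>p\<in>UNIV. \<bar>sig (P (fst p) (snd p)) (\<lambda>_. 0)\<bar>)"

lemma stage_M: "ereal (- Mb) \<le> stage sig P r \<gamma> Q t xa"
proof -
  obtain x a where xa: "xa = (x, a)" by (cases xa)
  have m: "\<bar>sig (P x a) (\<lambda>_. 0)\<bar> \<le> Mb"
    unfolding Mb_def using member_le_sum[of "(x, a)" UNIV "\<lambda>p. \<bar>sig (P (fst p) (snd p)) (\<lambda>_. 0)\<bar>"] by simp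
  have "\<gamma> * sig (P x a) (\<lambda>_. 0) \<le> \<bar>sig (P x a) (\<lambda>_. 0)\<bar>"
  proof -
    have "\<gamma> * sig (P x a) (\<lambda>_. 0) \<le> \<gamma> * \<bar>sig (P x a) (\<lambda>_. 0)\<bar>" using g0 by (intro mult_left_mono) auto
    also have "\<dots> \<le> \<bar>sig (P x a) (\<lambda>_. 0)\<bar>" using g0 g1 by (intro mult_left_le_one_le) auto
    finally show ?thesis .
  qed
  hence "- Mb \<le> r x a - \<gamma> * sig (P x a) (\<lambda>_. 0) - \<gamma> * pexp (Q t x a) (\<lambda>_. 0)"
  proof -
    assume h: "\<gamma> * sig (P x a) (\<lambda>_. 0) \<le> \<bar>sig (P x a) (\<lambda>_. 0)\<bar>"
    have "0 \<le> r x a" using rew by simp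
    moreover have "\<gamma> * pexp (Q t x a) (\<lambda>_. 0) = 0" by (simp add: pexp_def)
    ultimately show ?thesis using h m by linarith
  qed
  hence "ereal (- Mb) \<le> ereal (r x a - \<gamma> * sig (P x a) (\<lambda>_. 0) - \<gamma> * pexp (Q t x a) (\<lambda>_. 0))" by simp
  also have "\<dots> \<le> stage sig P r \<gamma> Q t (x, a)" by (rule stage_lower)
  finally show ?thesis by (simp add: xa)
qed


lemma robust_lower:
  fixes \<mu> :: "('s, 'a) hpolicy" and W :: "'s \<Rightarrow> real"
  assumes L2: "\<And>h x. h \<noteq> [] \<Longrightarrow> W x \<le> (\<Sum>a\<in>UNIV. pmf (\<mu> h x) a * (r x a - \<gamma> * sig (P x a) W))"
  shows "ereal (\<Sum>a\<in>UNIV. pmf (\<mu> [] s) a * (r s a - \<gamma> * sig (P s a) W)) \<le> ret sig P r \<gamma> \<mu> Q s"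
proof (rule ret_lower[where g = "\<lambda>x a. r x a - \<gamma> * sig (P x a) W", OF g0 g1 _ L2])
  fix t h
  show "ereal (r (fst (last h)) (snd (last h)) - \<gamma> * sig (P (fst (last h)) (snd (last h))) W -
          \<gamma> * pexp (Q t (fst (last h)) (snd (last h))) W) \<le> stage sig P r \<gamma> Q t (last h)"
    using stage_lower[of "fst (last h)" "snd (last h)" W Q t] by simp
qed

lemma robust_upper:
  fixes \<mu> :: "('s, 'a) hpolicy" and W :: "'s \<Rightarrow> real"
  assumes U2: "\<And>h x. h \<noteq> [] \<Longrightarrow> (\<Sum>a\<in>UNIV. pmf (\<mu> h x) a * (r x a - \<gamma> * sig (P x a) W)) \<le> W x"
  shows "(INF Q. ret sig P r \<gamma> \<mu> Q s) \<le> ereal (\<Sum>a\<in>UNIV. pmf (\<mu> [] s) a * (r s a - \<gamma> * sig (P s a) W))"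
    (is "_ \<le> ereal ?x0")
proof (rule ereal_le_epsilon2)
  fix e :: real assume e: "0 < e"
  define \<epsilon> where "\<epsilon> = e * (1 - \<gamma>)"
  have \<epsilon>: "0 < \<epsilon>" using e g1 by (simp add: \<epsilon>_def)
  define Qe where "Qe x a = (SOME \<nu>. penalty sig \<nu> (P x a) \<le> ereal (- sig (P x a) W - pexp \<nu> W + \<epsilon>))" for x a
  have Qe: "penalty sig (Qe x a) (P x a) \<le> ereal (- sig (P x a) W - pexp (Qe x a) W + \<epsilon>)" for x a
    unfolding Qe_def by (rule someI_ex) (rule dual_eps, use crm \<epsilon> in auto)
  have "ret sig P r \<gamma> \<mu> (\<lambda>t. Qe) s \<le> ereal (?x0 + \<gamma> * \<epsilon> / (1 - \<gamma>))"
  proof (rule ret_upper[where g = "\<lambda>x a. r x a - \<gamma> * sig (P x a) W" and M = Mb, OF g0 g1 _ _ U2])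
    fix t h
    show "stage sig P r \<gamma> (\<lambda>t. Qe) t (last h) \<le> ereal (r (fst (last h)) (snd (last h)) -
        \<gamma> * sig (P (fst (last h)) (snd (last h))) W - \<gamma> * pexp (Qe (fst (last h)) (snd (last h))) W + \<gamma> * \<epsilon>)"
      using stage_upper[of "\<lambda>t. Qe" t "fst (last h)" "snd (last h)" W \<epsilon>, OF Qe] by simp
    show "ereal (- Mb) \<le> stage sig P r \<gamma> (\<lambda>t. Qe) t (last h)" by (rule stage_M)
  qed
  also have "\<gamma> * \<epsilon> / (1 - \<gamma>) = \<gamma> * e" using g1 by (simp add: \<epsilon>_def)
  also have "\<gamma> * e \<le> e" using g0 g1 e by (intro mult_left_le_one_le) auto
  hence "ereal (?x0 + \<gamma> * e) \<le> ereal ?x0 + ereal e" by simp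
  finally have "ret sig P r \<gamma> \<mu> (\<lambda>t. Qe) s \<le> ereal ?x0 + ereal e" .
  moreover have "(INF Q. ret sig P r \<gamma> \<mu> Q s) \<le> ret sig P r \<gamma> \<mu> (\<lambda>t. Qe) s" by (rule INF_lower) simp
  ultimately show "(INF Q. ret sig P r \<gamma> \<mu> Q s) \<le> ereal ?x0 + ereal e" by (rule order_trans[rotated])
qed

lemma robust_exact:
  fixes \<mu> :: "('s, 'a) hpolicy" and W :: "'s \<Rightarrow> real"
  assumes U2: "\<And>h x. h \<noteq> [] \<Longrightarrow> (\<Sum>a\<in>UNIV. pmf (\<mu> h x) a * (r x a - \<gamma> * sig (P x a) W)) \<le> W x"
    and Ps: "\<forall>x a \<nu>. penalty sig (Ps x a) (P x a) + ereal (pexp (Ps x a) W) \<le> penalty sig \<nu> (P x a) + ereal (pexp \<nu> W)"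
  shows "ret sig P r \<gamma> \<mu> (\<lambda>t. Ps) s \<le> ereal (\<Sum>a\<in>UNIV. pmf (\<mu> [] s) a * (r s a - \<gamma> * sig (P s a) W))"
proof -
  have Pa: "penalty sig (Ps x a) (P x a) \<le> ereal (- sig (P x a) W - pexp (Ps x a) W + 0)" for x a
    using dual_attain[of sig "P x a" "Ps x a" W] crm Ps by simp
  have "ret sig P r \<gamma> \<mu> (\<lambda>t. Ps) s \<le> ereal ((\<Sum>a\<in>UNIV. pmf (\<mu> [] s) a * (r s a - \<gamma> * sig (P s a) W)) + 0 / (1 - \<gamma>))"
  proof (rule ret_upper[where g = "\<lambda>x a. r x a - \<gamma> * sig (P x a) W" and M = Mb, OF g0 g1 _ _ U2])
    fix t h
    show "stage sig P r \<gamma> (\<lambda>t. Ps) t (last h) \<le> ereal (r (fst (last h)) (snd (last h)) -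
        \<gamma> * sig (P (fst (last h)) (snd (last h))) W - \<gamma> * pexp (Ps (fst (last h)) (snd (last h))) W + 0)"
      using stage_upper[of "\<lambda>t. Ps" t "fst (last h)" "snd (last h)" W 0, OF Pa] by simp
    show "ereal (- Mb) \<le> stage sig P r \<gamma> (\<lambda>t. Ps) t (last h)" by (rule stage_M)
  qed
  thus ?thesis by simp
qed
end


context
  fixes P :: "'s::finite \<Rightarrow> 'a::finite \<Rightarrow> 's pmf"
    and sig :: "'s pmf \<Rightarrow> ('s \<Rightarrow> real) \<Rightarrow> real"
    and r :: "'s \<Rightarrow> 'a \<Rightarrow> real"
    and \<gamma> :: real
  assumes crm: "\<forall>s a. convex_risk_measure (sig (P s a))"
    and rew: "\<forall>s a. 0 \<le> r s a \<and> r s a \<le> 1"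
    and g0: "0 \<le> \<gamma>" and g1: "\<gamma> < 1"
begin

lemma gS_le: "r x a - \<gamma> * sig (P x a) (rs_V_opt sig P r \<gamma>) \<le> rs_V_opt sig P r \<gamma> x"
proof -
  have "r x a - \<gamma> * sig (P x a) (rs_V_opt sig P r \<gamma>) \<le> (MAX a. r x a - \<gamma> * sig (P x a) (rs_V_opt sig P r \<gamma>))"
    by (rule Max_ge) auto
  thus ?thesis using rs_V_opt_fix[OF crm g0 g1] by simp
qed

lemma gS_argmax: "\<exists>a. rs_V_opt sig P r \<gamma> x = r x a - \<gamma> * sig (P x a) (rs_V_opt sig P r \<gamma>)"
proof -
  have "(MAX a. r x a - \<gamma> * sig (P x a) (rs_V_opt sig P r \<gamma>)) \<in> range (\<lambda>a. r x a - \<gamma> * sig (P x a) (rs_V_opt sig P r \<gamma>))"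
    by (rule Max_in) auto
  then obtain a where "(MAX a. r x a - \<gamma> * sig (P x a) (rs_V_opt sig P r \<gamma>)) = r x a - \<gamma> * sig (P x a) (rs_V_opt sig P r \<gamma>)"
    by blast
  moreover have "rs_V_opt sig P r \<gamma> x = (MAX a. r x a - \<gamma> * sig (P x a) (rs_V_opt sig P r \<gamma>))"
    using rs_V_opt_fix[OF crm g0 g1, of r] by blast
  ultimately show ?thesis by metis
qed

lemma upper_opt:
  fixes \<mu> :: "('s, 'a) hpolicy"
  shows "(INF Q. ret sig P r \<gamma> \<mu> Q s) \<le> ereal (\<Sum>a\<in>UNIV. pmf (\<mu> [] s) a * (r s a - \<gamma> * sig (P s a) (rs_V_opt sig P r \<gamma>)))"
  by (rule robust_upper[OF crm rew g0 g1]) (rule pmf_wavg_le, rule gS_le)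

lemma lower_det:
  fixes f :: "'s \<Rightarrow> 'a" and \<mu> :: "('s, 'a) hpolicy"
  assumes f: "\<And>x. rs_V_opt sig P r \<gamma> x \<le> r x (f x) - \<gamma> * sig (P x (f x)) (rs_V_opt sig P r \<gamma>)"
    and \<mu>: "\<And>h. h \<noteq> [] \<Longrightarrow> \<mu> h = det_pol f h"
  shows "ereal (\<Sum>a\<in>UNIV. pmf (\<mu> [] s) a * (r s a - \<gamma> * sig (P s a) (rs_V_opt sig P r \<gamma>))) \<le> ret sig P r \<gamma> \<mu> Q s"
proof (rule robust_lower[OF crm rew g0 g1])
  fix h :: "('s \<times> 'a) list" and x assume "h \<noteq> []"
  thus "rs_V_opt sig P r \<gamma> x \<le> (\<Sum>a\<in>UNIV. pmf (\<mu> h x) a * (r x a - \<gamma> * sig (P x a) (rs_V_opt sig P r \<gamma>)))"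
    using f[of x] \<mu> by (simp add: det_pol_def sum_return_pmf)
qed

lemma pol_eq:
  fixes \<pi> :: "'s \<Rightarrow> 'a pmf" and \<mu> :: "('s, 'a) hpolicy"
  assumes \<mu>: "\<And>h. h \<noteq> [] \<Longrightarrow> \<mu> h = stat_pol \<pi> h"
  shows "ereal (\<Sum>a\<in>UNIV. pmf (\<mu> [] s) a * (r s a - \<gamma> * sig (P s a) (rs_V_pol sig P r \<gamma> \<pi>))) \<le> ret sig P r \<gamma> \<mu> Q s"
    and "(INF Q. ret sig P r \<gamma> \<mu> Q s) \<le> ereal (\<Sum>a\<in>UNIV. pmf (\<mu> [] s) a * (r s a - \<gamma> * sig (P s a) (rs_V_pol sig P r \<gamma> \<pi>)))"
proof -
  have fx: "(\<Sum>a\<in>UNIV. pmf (\<mu> h x) a * (r x a - \<gamma> * sig (P x a) (rs_V_pol sig P r \<gamma> \<pi>))) = rs_V_pol sig P r \<gamma> \<pi> x"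
    if "h \<noteq> []" for h x
    using rs_V_pol_fix[OF crm g0 g1, of r \<pi>] \<mu>[OF that] by (simp add: stat_pol_def)
  show "ereal (\<Sum>a\<in>UNIV. pmf (\<mu> [] s) a * (r s a - \<gamma> * sig (P s a) (rs_V_pol sig P r \<gamma> \<pi>))) \<le> ret sig P r \<gamma> \<mu> Q s"
    by (rule robust_lower[OF crm rew g0 g1]) (simp add: fx)
  show "(INF Q. ret sig P r \<gamma> \<mu> Q s) \<le> ereal (\<Sum>a\<in>UNIV. pmf (\<mu> [] s) a * (r s a - \<gamma> * sig (P s a) (rs_V_pol sig P r \<gamma> \<pi>)))"
    by (rule robust_upper[OF crm rew g0 g1]) (simp add: fx)
qed

end


theorem mainTheorem3:
  fixes P :: "'s::finite \<Rightarrow> 'a::finite \<Rightarrow> 's pmf"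
    and sig :: "'s pmf \<Rightarrow> ('s \<Rightarrow> real) \<Rightarrow> real"
    and r :: "'s \<Rightarrow> 'a \<Rightarrow> real"
    and \<gamma> :: real
  assumes crm: "\<forall>s a. convex_risk_measure (sig (P s a))"
    and rew: "\<forall>s a. 0 \<le> r s a \<and> r s a \<le> 1"
    and g0: "0 \<le> \<gamma>" and g1: "\<gamma> < 1"
  shows
   "(\<forall>s. rb_V_opt sig P r \<gamma> s = ereal (rs_V_opt sig P r \<gamma> s)) \<and>
    (\<forall>\<pi> s. rb_V_pol sig P r \<gamma> \<pi> s = ereal (rs_V_pol sig P r \<gamma> \<pi> s)) \<and>
    (\<forall>s a. rb_Q_opt sig P r \<gamma> s a = ereal (rs_Q_opt sig P r \<gamma> s a)) \<and>
    (\<forall>\<pi> s a. rb_Q_pol sig P r \<gamma> \<pi> s a = ereal (rs_Q_pol sig P r \<gamma> \<pi> s a)) \<and>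
    (\<forall>(\<pi>s :: 's \<Rightarrow> 'a) (Ps :: 's \<Rightarrow> 'a \<Rightarrow> 's pmf).
       (\<forall>s a'. r s a' - \<gamma> * sig (P s a') (rs_V_opt sig P r \<gamma>)
               \<le> r s (\<pi>s s) - \<gamma> * sig (P s (\<pi>s s)) (rs_V_opt sig P r \<gamma>)) \<and>
       (\<forall>s a \<mu>. penalty sig (Ps s a) (P s a) + ereal (pexp (Ps s a) (rs_V_opt sig P r \<gamma>))
               \<le> penalty sig \<mu> (P s a) + ereal (pexp \<mu> (rs_V_opt sig P r \<gamma>)))
       \<longrightarrow> (\<forall>s. (INF Q. ret sig P r \<gamma> (det_pol \<pi>s) Q s) = rb_V_opt sig P r \<gamma> s \<and>
                ret sig P r \<gamma> (det_pol \<pi>s) (\<lambda>t. Ps) s = rb_V_opt sig P r \<gamma> s)) \<and>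
    (\<forall>(\<pi> :: 's \<Rightarrow> 'a pmf) (Ps :: 's \<Rightarrow> 'a \<Rightarrow> 's pmf).
       (\<forall>s a \<mu>. penalty sig (Ps s a) (P s a) + ereal (pexp (Ps s a) (rs_V_pol sig P r \<gamma> \<pi>))
               \<le> penalty sig \<mu> (P s a) + ereal (pexp \<mu> (rs_V_pol sig P r \<gamma> \<pi>)))
       \<longrightarrow> (\<forall>s. ret sig P r \<gamma> (stat_pol \<pi>) (\<lambda>t. Ps) s = rb_V_pol sig P r \<gamma> \<pi> s))"
proof -
  let ?Vs = "rs_V_opt sig P r \<gamma>"
  have "\<forall>x. \<exists>a. ?Vs x = r x a - \<gamma> * sig (P x a) ?Vs" using gS_argmax[OF crm rew g0 g1] by blast
  then obtain \<pi>st where \<pi>st: "\<forall>x. ?Vs x = r x (\<pi>st x) - \<gamma> * sig (P x (\<pi>st x)) ?Vs" by metis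
  have \<pi>le: "?Vs x \<le> r x (\<pi>st x) - \<gamma> * sig (P x (\<pi>st x)) ?Vs" for x
    by (rule eq_refl) (rule \<pi>st[rule_format])
  have gle: "r x a - \<gamma> * sig (P x a) ?Vs \<le> ?Vs x" for x a by (rule gS_le[OF crm rew g0 g1])
  have upS: "(INF Q. ret sig P r \<gamma> \<mu> Q s) \<le> ereal (?Vs s)" for \<mu> :: "('s, 'a) hpolicy" and s
  proof -
    have "(INF Q. ret sig P r \<gamma> \<mu> Q s) \<le> ereal (\<Sum>a\<in>UNIV. pmf (\<mu> [] s) a * (r s a - \<gamma> * sig (P s a) ?Vs))"
      by (rule upper_opt[OF crm rew g0 g1])
    also have "\<dots> \<le> ereal (?Vs s)" by (simp only: ereal_less_eq) (rule pmf_wavg_le, rule gle)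
    finally show ?thesis .
  qed
  have detS: "ereal (?Vs s) \<le> ret sig P r \<gamma> (det_pol f) Q s"
    if f: "\<And>x. ?Vs x \<le> r x (f x) - \<gamma> * sig (P x (f x)) ?Vs" for f s Q
  proof -
    have "ereal (\<Sum>a\<in>UNIV. pmf (det_pol f [] s) a * (r s a - \<gamma> * sig (P s a) ?Vs)) \<le> ret sig P r \<gamma> (det_pol f) Q s"
      by (rule lower_det[OF crm rew g0 g1 f]) simp
    moreover have "(\<Sum>a\<in>UNIV. pmf (det_pol f [] s) a * (r s a - \<gamma> * sig (P s a) ?Vs)) = r s (f s) - \<gamma> * sig (P s (f s)) ?Vs"
      by (simp add: det_pol_def sum_return_pmf)
    ultimately show ?thesis using f[of s] by (metis ereal_less_eq(3) order_trans)
  qed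
  have C1: "\<forall>s. rb_V_opt sig P r \<gamma> s = ereal (?Vs s)"
  proof
    fix s
    have "rb_V_opt sig P r \<gamma> s \<le> ereal (?Vs s)"
      unfolding rb_V_opt_def by (rule SUP_least) (rule upS)
    moreover have "ereal (?Vs s) \<le> rb_V_opt sig P r \<gamma> s"
    proof -
      have "ereal (?Vs s) \<le> (INF Q. ret sig P r \<gamma> (det_pol \<pi>st) Q s)"
        by (rule INF_greatest) (rule detS[OF \<pi>le])
      also have "\<dots> \<le> rb_V_opt sig P r \<gamma> s" unfolding rb_V_opt_def by (rule SUP_upper) simp
      finally show ?thesis .
    qed
    ultimately show "rb_V_opt sig P r \<gamma> s = ereal (?Vs s)" by (rule antisym)
  qed
  have C2: "\<forall>\<pi> s. rb_V_pol sig P r \<gamma> \<pi> s = ereal (rs_V_pol sig P r \<gamma> \<pi> s)"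
  proof (intro allI)
    fix \<pi> :: "'s \<Rightarrow> 'a pmf" and s
    have e: "(\<Sum>a\<in>UNIV. pmf (stat_pol \<pi> [] s) a * (r s a - \<gamma> * sig (P s a) (rs_V_pol sig P r \<gamma> \<pi>))) = rs_V_pol sig P r \<gamma> \<pi> s"
      using rs_V_pol_fix[OF crm g0 g1, of r \<pi>] by (simp add: stat_pol_def)
    have "ereal (rs_V_pol sig P r \<gamma> \<pi> s) \<le> rb_V_pol sig P r \<gamma> \<pi> s"
      unfolding rb_V_pol_def by (rule INF_greatest) (use pol_eq(1)[OF crm rew g0 g1, of "stat_pol \<pi>" \<pi> s] e in simp)
    moreover have "rb_V_pol sig P r \<gamma> \<pi> s \<le> ereal (rs_V_pol sig P r \<gamma> \<pi> s)"
      unfolding rb_V_pol_def using pol_eq(2)[OF crm rew g0 g1, of "stat_pol \<pi>" \<pi> s] e by simp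
    ultimately show "rb_V_pol sig P r \<gamma> \<pi> s = ereal (rs_V_pol sig P r \<gamma> \<pi> s)" by (rule antisym[rotated])
  qed
  have C3: "\<forall>s a. rb_Q_opt sig P r \<gamma> s a = ereal (rs_Q_opt sig P r \<gamma> s a)"
  proof (intro allI)
    fix s a
    have ff: "(\<Sum>b\<in>UNIV. pmf (force_first a \<mu> [] s) b * (r s b - \<gamma> * sig (P s b) ?Vs)) = rs_Q_opt sig P r \<gamma> s a"
      for \<mu> :: "('s, 'a) hpolicy"
      by (simp add: force_first_def sum_return_pmf rs_Q_opt_def)
    have "rb_Q_opt sig P r \<gamma> s a \<le> ereal (rs_Q_opt sig P r \<gamma> s a)"
      unfolding rb_Q_opt_def
    proof (rule SUP_least)
      fix \<mu> :: "('s, 'a) hpolicy"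
      show "(INF Q. ret sig P r \<gamma> (force_first a \<mu>) Q s) \<le> ereal (rs_Q_opt sig P r \<gamma> s a)"
        using upper_opt[OF crm rew g0 g1, of "force_first a \<mu>" s] ff[of \<mu>] by simp
    qed
    moreover have "ereal (rs_Q_opt sig P r \<gamma> s a) \<le> rb_Q_opt sig P r \<gamma> s a"
    proof -
      have "ereal (rs_Q_opt sig P r \<gamma> s a) \<le> (INF Q. ret sig P r \<gamma> (force_first a (det_pol \<pi>st)) Q s)"
      proof (rule INF_greatest)
        fix Q
        have "ereal (\<Sum>b\<in>UNIV. pmf (force_first a (det_pol \<pi>st) [] s) b * (r s b - \<gamma> * sig (P s b) ?Vs))
              \<le> ret sig P r \<gamma> (force_first a (det_pol \<pi>st)) Q s"
          by (rule lower_det[OF crm rew g0 g1 \<pi>le]) (auto simp: force_first_def)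
        thus "ereal (rs_Q_opt sig P r \<gamma> s a) \<le> ret sig P r \<gamma> (force_first a (det_pol \<pi>st)) Q s"
          using ff[of "det_pol \<pi>st"] by simp
      qed
      also have "\<dots> \<le> rb_Q_opt sig P r \<gamma> s a" unfolding rb_Q_opt_def by (rule SUP_upper) simp
      finally show ?thesis .
    qed
    ultimately show "rb_Q_opt sig P r \<gamma> s a = ereal (rs_Q_opt sig P r \<gamma> s a)" by (rule antisym)
  qed
  have C4: "\<forall>\<pi> s a. rb_Q_pol sig P r \<gamma> \<pi> s a = ereal (rs_Q_pol sig P r \<gamma> \<pi> s a)"
  proof (intro allI)
    fix \<pi> :: "'s \<Rightarrow> 'a pmf" and s a
    have e: "(\<Sum>b\<in>UNIV. pmf (force_first a (stat_pol \<pi>) [] s) b * (r s b - \<gamma> * sig (P s b) (rs_V_pol sig P r \<gamma> \<pi>)))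
        = rs_Q_pol sig P r \<gamma> \<pi> s a"
      by (simp add: force_first_def sum_return_pmf rs_Q_pol_def)
    have st: "\<And>h. h \<noteq> [] \<Longrightarrow> force_first a (stat_pol \<pi>) h = stat_pol \<pi> h"
      by (auto simp: force_first_def)
    have "ereal (rs_Q_pol sig P r \<gamma> \<pi> s a) \<le> rb_Q_pol sig P r \<gamma> \<pi> s a"
      unfolding rb_Q_pol_def by (rule INF_greatest) (use pol_eq(1)[OF crm rew g0 g1 st, of s] e in simp)
    moreover have "rb_Q_pol sig P r \<gamma> \<pi> s a \<le> ereal (rs_Q_pol sig P r \<gamma> \<pi> s a)"
      unfolding rb_Q_pol_def using pol_eq(2)[OF crm rew g0 g1 st, of s] e by simp
    ultimately show "rb_Q_pol sig P r \<gamma> \<pi> s a = ereal (rs_Q_pol sig P r \<gamma> \<pi> s a)" by (rule antisym[rotated])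
  qed
  have C5: "\<forall>(\<pi>s :: 's \<Rightarrow> 'a) (Ps :: 's \<Rightarrow> 'a \<Rightarrow> 's pmf).
       (\<forall>s a'. r s a' - \<gamma> * sig (P s a') (rs_V_opt sig P r \<gamma>)
               \<le> r s (\<pi>s s) - \<gamma> * sig (P s (\<pi>s s)) (rs_V_opt sig P r \<gamma>)) \<and>
       (\<forall>s a \<mu>. penalty sig (Ps s a) (P s a) + ereal (pexp (Ps s a) (rs_V_opt sig P r \<gamma>))
               \<le> penalty sig \<mu> (P s a) + ereal (pexp \<mu> (rs_V_opt sig P r \<gamma>)))
       \<longrightarrow> (\<forall>s. (INF Q. ret sig P r \<gamma> (det_pol \<pi>s) Q s) = rb_V_opt sig P r \<gamma> s \<and>
                ret sig P r \<gamma> (det_pol \<pi>s) (\<lambda>t. Ps) s = rb_V_opt sig P r \<gamma> s)"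
  proof (intro allI impI)
    fix \<pi>s :: "'s \<Rightarrow> 'a" and Ps :: "'s \<Rightarrow> 'a \<Rightarrow> 's pmf" and s
    assume h: "(\<forall>s a'. r s a' - \<gamma> * sig (P s a') (rs_V_opt sig P r \<gamma>)
               \<le> r s (\<pi>s s) - \<gamma> * sig (P s (\<pi>s s)) (rs_V_opt sig P r \<gamma>)) \<and>
       (\<forall>s a \<mu>. penalty sig (Ps s a) (P s a) + ereal (pexp (Ps s a) (rs_V_opt sig P r \<gamma>))
               \<le> penalty sig \<mu> (P s a) + ereal (pexp \<mu> (rs_V_opt sig P r \<gamma>)))"
    have f: "?Vs x \<le> r x (\<pi>s x) - \<gamma> * sig (P x (\<pi>s x)) ?Vs" for x
      using \<pi>st[rule_format, of x] h[THEN conjunct1, rule_format, of x "\<pi>st x"] by simp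
    have "(INF Q. ret sig P r \<gamma> (det_pol \<pi>s) Q s) = ereal (?Vs s)"
    proof (rule antisym)
      show "(INF Q. ret sig P r \<gamma> (det_pol \<pi>s) Q s) \<le> ereal (?Vs s)" by (rule upS)
      show "ereal (?Vs s) \<le> (INF Q. ret sig P r \<gamma> (det_pol \<pi>s) Q s)"
        by (rule INF_greatest) (rule detS[OF f])
    qed
    moreover have "ret sig P r \<gamma> (det_pol \<pi>s) (\<lambda>t. Ps) s = ereal (?Vs s)"
    proof (rule antisym)
      have "ret sig P r \<gamma> (det_pol \<pi>s) (\<lambda>t. Ps) s \<le>
          ereal (\<Sum>a\<in>UNIV. pmf (det_pol \<pi>s [] s) a * (r s a - \<gamma> * sig (P s a) ?Vs))"
        by (rule robust_exact[OF crm rew g0 g1]) (use h in \<open>auto intro: pmf_wavg_le gle\<close>)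
      also have "\<dots> \<le> ereal (?Vs s)" by (simp add: det_pol_def sum_return_pmf gle)
      finally show "ret sig P r \<gamma> (det_pol \<pi>s) (\<lambda>t. Ps) s \<le> ereal (?Vs s)" .
      show "ereal (?Vs s) \<le> ret sig P r \<gamma> (det_pol \<pi>s) (\<lambda>t. Ps) s" by (rule detS[OF f])
    qed
    ultimately show "(INF Q. ret sig P r \<gamma> (det_pol \<pi>s) Q s) = rb_V_opt sig P r \<gamma> s \<and>
                ret sig P r \<gamma> (det_pol \<pi>s) (\<lambda>t. Ps) s = rb_V_opt sig P r \<gamma> s"
      using C1 by simp
  qed
  have C6: "\<forall>(\<pi> :: 's \<Rightarrow> 'a pmf) (Ps :: 's \<Rightarrow> 'a \<Rightarrow> 's pmf).
       (\<forall>s a \<mu>. penalty sig (Ps s a) (P s a) + ereal (pexp (Ps s a) (rs_V_pol sig P r \<gamma> \<pi>))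
               \<le> penalty sig \<mu> (P s a) + ereal (pexp \<mu> (rs_V_pol sig P r \<gamma> \<pi>)))
       \<longrightarrow> (\<forall>s. ret sig P r \<gamma> (stat_pol \<pi>) (\<lambda>t. Ps) s = rb_V_pol sig P r \<gamma> \<pi> s)"
  proof (intro allI impI)
    fix \<pi> :: "'s \<Rightarrow> 'a pmf" and Ps :: "'s \<Rightarrow> 'a \<Rightarrow> 's pmf" and s
    assume h: "\<forall>s a \<mu>. penalty sig (Ps s a) (P s a) + ereal (pexp (Ps s a) (rs_V_pol sig P r \<gamma> \<pi>))
               \<le> penalty sig \<mu> (P s a) + ereal (pexp \<mu> (rs_V_pol sig P r \<gamma> \<pi>))"
    have fx: "(\<Sum>a\<in>UNIV. pmf (stat_pol \<pi> hh x) a * (r x a - \<gamma> * sig (P x a) (rs_V_pol sig P r \<gamma> \<pi>))) = rs_V_pol sig P r \<gamma> \<pi> x"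
      for hh x
      using rs_V_pol_fix[OF crm g0 g1, of r \<pi>] by (simp add: stat_pol_def)
    have "ret sig P r \<gamma> (stat_pol \<pi>) (\<lambda>t. Ps) s = ereal (rs_V_pol sig P r \<gamma> \<pi> s)"
    proof (rule antisym)
      have "ret sig P r \<gamma> (stat_pol \<pi>) (\<lambda>t. Ps) s \<le>
          ereal (\<Sum>a\<in>UNIV. pmf (stat_pol \<pi> [] s) a * (r s a - \<gamma> * sig (P s a) (rs_V_pol sig P r \<gamma> \<pi>)))"
        by (rule robust_exact[OF crm rew g0 g1]) (use h fx in auto)
      thus "ret sig P r \<gamma> (stat_pol \<pi>) (\<lambda>t. Ps) s \<le> ereal (rs_V_pol sig P r \<gamma> \<pi> s)" by (simp only: fx)
      have "ereal (\<Sum>a\<in>UNIV. pmf (stat_pol \<pi> [] s) a * (r s a - \<gamma> * sig (P s a) (rs_V_pol sig P r \<gamma> \<pi>)))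
          \<le> ret sig P r \<gamma> (stat_pol \<pi>) (\<lambda>t. Ps) s"
        by (rule pol_eq(1)[OF crm rew g0 g1]) simp
      thus "ereal (rs_V_pol sig P r \<gamma> \<pi> s) \<le> ret sig P r \<gamma> (stat_pol \<pi>) (\<lambda>t. Ps) s" by (simp only: fx)
    qed
    thus "ret sig P r \<gamma> (stat_pol \<pi>) (\<lambda>t. Ps) s = rb_V_pol sig P r \<gamma> \<pi> s" using C2 by simp
  qed
  show ?thesis using C1 C2 C3 C4 C5 C6 by blast
qed


end
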